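(* Let $S$ be a locally compact Hausdorff space with its Borel $\sigma$-algebra $\mathscr{S}$, let $n\le N$ be positive integers, and let $X=(X_1,\ldots,X_n)$ be an exchangeable random element of $S^n$ such that the law of $X_1$ is outer regular and tight. Then $X$ is $N$-extendible if and only if $\|\mathcal E^N_n\|=1$, where \[ \|\mathcal E^N_n\| := \sup\Big\{ |\mathbb{E}\, g(X_1,\ldots,X_n)| :\ g:S^n\to\mathbb{R} \text{ bounded measurable},\ |U^N_n g(x)|\le 1 \text{ for all } x\in S^N\Big\}. \]
   Context: $S^n$ carries the product $\sigma$-algebra $\mathscr{S}^n$. A random element $(X_1,\ldots,X_n)$ of $S^n$ is exchangeable if its law is invariant under all $n!$ permutations of coordinates. For $N\ge n$, $X$ is $N$-extendible if there is an exchangeable random element $(Y_1,\ldots,Y_N)$ of $S^N$ with $(Y_1,\ldots,Y_n)$ equal in distribution to $(X_1,\ldots,X_n)$. $\mathfrak S[n,N]$ is the set of injections $\{1,\ldots,n\}\to\{1,\ldots,N\}$, $(N)_n=N(N-1)\cdots(N-n+1)=|\mathfrak S[n,N]|$, and for $g:S^n\to\mathbb{R}$, $U^N_n g(x_1,\ldots,x_N)=\frac{1}{(N)_n}\sum_{\sigma\in\mathfrak S[n,N]} g(x_{\sigma(1)},\ldots,x_{\sigma(n)})$. A probability measure $P$ on $S$ is tight if for every $\epsilon>0$ there is a compact $K$ with $P(K)\ge 1-\epsilon$, and outer regular if $P(A)=\inf\{P(O): O\supset A \text{ open}\}$ for all $A\in\mathscr{S}$. *)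

theory Defs
  imports "HOL-Probability.Probability"
begin

definition Sn :: "nat \<Rightarrow> ('a::topological_space) measure \<Rightarrow> (nat \<Rightarrow> 'a) measure" where
  "Sn n B = PiM {..<n} (\<lambda>_. B)"

abbreviation SB :: "nat \<Rightarrow> (nat \<Rightarrow> 'a::topological_space) measure" where
  "SB n \<equiv> Sn n borel"

definition exchangeable_law :: "nat \<Rightarrow> (nat \<Rightarrow> 'a::topological_space) measure \<Rightarrow> bool" where
  "exchangeable_law n P \<longleftrightarrow>
     (\<forall>\<sigma>. \<sigma> permutes {..<n} \<longrightarrow> distr P (SB n) (\<lambda>x. \<lambda>i\<in>{..<n}. x (\<sigma> i)) = P)"

definition exchangeable :: "'w measure \<Rightarrow> nat \<Rightarrow> ('w \<Rightarrow> nat \<Rightarrow> 'a::topological_space) \<Rightarrow> bool" where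
  "exchangeable M n X \<longleftrightarrow> exchangeable_law n (distr M (SB n) X)"

text \<open>N-extendibility: there is an exchangeable random element Y of S^N (given by its law Q)
  whose first n coordinates have the same law as X.\<close>
definition extendible :: "'w measure \<Rightarrow> nat \<Rightarrow> nat \<Rightarrow> ('w \<Rightarrow> nat \<Rightarrow> 'a::topological_space) \<Rightarrow> bool" where
  "extendible M n N X \<longleftrightarrow>
     (\<exists>Q. prob_space Q \<and> sets Q = sets (SB N) \<and> exchangeable_law N Q \<and>
          distr Q (SB n) (\<lambda>y. \<lambda>i\<in>{..<n}. y i) = distr M (SB n) X)"

text \<open>Injections {1..n} -> {1..N} (here 0-based).\<close>
definition injs :: "nat \<Rightarrow> nat \<Rightarrow> (nat \<Rightarrow> nat) set" where
  "injs n N = {\<sigma>. \<sigma> \<in> {..<n} \<rightarrow>\<^sub>E {..<N} \<and> inj_on \<sigma> {..<n}}"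

definition ffact :: "nat \<Rightarrow> nat \<Rightarrow> real" where
  "ffact N n = (\<Prod>i<n. real (N - i))"

definition U_op :: "nat \<Rightarrow> nat \<Rightarrow> ((nat \<Rightarrow> 'a) \<Rightarrow> real) \<Rightarrow> (nat \<Rightarrow> 'a) \<Rightarrow> real" where
  "U_op N n g x = (1 / ffact N n) * (\<Sum>\<sigma>\<in>injs n N. g (\<lambda>i\<in>{..<n}. x (\<sigma> i)))"

text \<open>The norm of the extension functional, as an extended real (it may be infinite).\<close>
definition ext_norm :: "'w measure \<Rightarrow> nat \<Rightarrow> nat \<Rightarrow> ('w \<Rightarrow> nat \<Rightarrow> 'a::topological_space) \<Rightarrow> ereal" where
  "ext_norm M n N X =
     (SUP g \<in> {g. g \<in> borel_measurable (SB n) \<and> bounded (g ` space (SB n)) \<and>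
                 (\<forall>x\<in>space (SB N). \<bar>U_op N n g x\<bar> \<le> 1)}.
        ereal \<bar>integral\<^sup>L M (\<lambda>w. g (X w))\<bar>)"

definition tight_measure :: "('a::topological_space) measure \<Rightarrow> bool" where
  "tight_measure P \<longleftrightarrow> (\<forall>\<epsilon>>0. \<exists>K. compact K \<and> K \<in> sets P \<and> measure P K \<ge> 1 - \<epsilon>)"

definition outer_regular :: "('a::topological_space) measure \<Rightarrow> bool" where
  "outer_regular P \<longleftrightarrow>
     (\<forall>A\<in>sets P. emeasure P A = (INF V \<in> {V. open V \<and> A \<subseteq> V}. emeasure P V))"

end

theory Submission
  imports Defs "HOL-Combinatorics.Permutations"
begin


definition vadd :: "('b \<Rightarrow> real) \<Rightarrow> ('b \<Rightarrow> real) \<Rightarrow> ('b \<Rightarrow> real)" where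
  "vadd u v = (\<lambda>x. u x + v x)"
definition vsc :: "real \<Rightarrow> ('b \<Rightarrow> real) \<Rightarrow> ('b \<Rightarrow> real)" where
  "vsc c u = (\<lambda>x. c * u x)"

lemma HB:
  fixes B V :: "('b \<Rightarrow> real) set" and p f :: "('b \<Rightarrow> real) \<Rightarrow> real"
  assumes B_add: "\<And>u v. u\<in>B \<Longrightarrow> v\<in>B \<Longrightarrow> vadd u v \<in> B"
    and B_sc: "\<And>c u. u\<in>B \<Longrightarrow> vsc c u \<in> B"
    and V_sub: "V \<subseteq> B"
    and V_add: "\<And>u v. u\<in>V \<Longrightarrow> v\<in>V \<Longrightarrow> vadd u v \<in> V"
    and V_sc: "\<And>c u. u\<in>V \<Longrightarrow> vsc c u \<in> V"
    and V_ne: "V \<noteq> {}"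
    and f_add: "\<And>u v. u\<in>V \<Longrightarrow> v\<in>V \<Longrightarrow> f (vadd u v) = f u + f v"
    and f_sc: "\<And>c u. u\<in>V \<Longrightarrow> f (vsc c u) = c * f u"
    and p_add: "\<And>u v. u\<in>B \<Longrightarrow> v\<in>B \<Longrightarrow> p (vadd u v) \<le> p u + p v"
    and p_sc: "\<And>c u. u\<in>B \<Longrightarrow> c > 0 \<Longrightarrow> p (vsc c u) = c * p u"
    and f_p: "\<And>u. u\<in>V \<Longrightarrow> f u \<le> p u"
  shows "\<exists>F. (\<forall>u\<in>V. F u = f u) \<and> (\<forall>u\<in>B. \<forall>v\<in>B. F (vadd u v) = F u + F v)
           \<and> (\<forall>u\<in>B. \<forall>c. F (vsc c u) = c * F u) \<and> (\<forall>u\<in>B. F u \<le> p u)"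
proof -
  define Pg where "Pg X \<longleftrightarrow> (\<forall>u y y'. (u,y)\<in>X \<longrightarrow> (u,y')\<in>X \<longrightarrow> y = y') \<and>
      (\<forall>u\<in>V. (u, f u) \<in> X) \<and>
      (\<forall>u y v z. (u,y)\<in>X \<longrightarrow> (v,z)\<in>X \<longrightarrow> (vadd u v, y+z) \<in> X) \<and>
      (\<forall>u y c. (u,y)\<in>X \<longrightarrow> (vsc c u, c*y) \<in> X) \<and>
      (\<forall>u y. (u,y)\<in>X \<longrightarrow> u \<in> B \<and> y \<le> p u)" for X
  define A where "A = {X. Pg X}"
  have G0: "{(u, f u) | u. u\<in>V} \<in> A"
    unfolding A_def Pg_def using V_add V_sc f_add f_sc V_sub f_p by auto
  have ch: "\<forall>C\<in>chains A. \<exists>U\<in>A. \<forall>X\<in>C. X \<subseteq> U"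
  proof
    fix C assume C: "C \<in> chains A"
    show "\<exists>U\<in>A. \<forall>X\<in>C. X \<subseteq> U"
    proof (cases "C = {}")
      case True then show ?thesis using G0 by auto
    next
      case False
      have CA: "C \<subseteq> A" and cc: "\<And>X Y. X\<in>C \<Longrightarrow> Y\<in>C \<Longrightarrow> X \<subseteq> Y \<or> Y \<subseteq> X"
        using C unfolding chains_def chain_subset_def by auto
      have PX: "\<And>X. X \<in> C \<Longrightarrow> Pg X" using CA unfolding A_def by auto
      have two: "\<exists>X\<in>C. a \<in> X \<and> b \<in> X" if "a \<in> \<Union>C" "b \<in> \<Union>C" for a b
        using that cc by blast
      have "Pg (\<Union>C)"
        unfolding Pg_def
      proof (intro conjI allI impI ballI)
        fix u y y' assume "(u,y) \<in> \<Union>C" "(u,y') \<in> \<Union>C"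
        then obtain X where "X\<in>C" "(u,y)\<in>X" "(u,y')\<in>X" using two by blast
        then show "y = y'" using PX unfolding Pg_def by blast
      next
        fix u assume "u \<in> V"
        obtain X where "X \<in> C" using False by blast
        then show "(u, f u) \<in> \<Union>C" using PX \<open>u\<in>V\<close> unfolding Pg_def by blast
      next
        fix u y v z assume "(u,y) \<in> \<Union>C" "(v,z) \<in> \<Union>C"
        then obtain X where "X\<in>C" "(u,y)\<in>X" "(v,z)\<in>X" using two by blast
        then show "(vadd u v, y+z) \<in> \<Union>C" using PX unfolding Pg_def by blast
      next
        fix u y c assume "(u,y) \<in> \<Union>C"
        then obtain X where "X\<in>C" "(u,y)\<in>X" by blast
        then show "(vsc c u, c*y) \<in> \<Union>C" using PX unfolding Pg_def by blast
      next
        fix u y assume "(u,y) \<in> \<Union>C"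
        then obtain X where "X\<in>C" "(u,y)\<in>X" by blast
        then show "u \<in> B" using PX unfolding Pg_def by blast
      next
        fix u y assume "(u,y) \<in> \<Union>C"
        then obtain X where "X\<in>C" "(u,y)\<in>X" by blast
        then show "y \<le> p u" using PX unfolding Pg_def by blast
      qed
      then show ?thesis unfolding A_def by auto
    qed
  qed
  from Zorn_Lemma2[OF ch] obtain X where XA: "X \<in> A" and Xmax: "\<And>Y. Y \<in> A \<Longrightarrow> X \<subseteq> Y \<Longrightarrow> Y = X"
    by blast
  have PX: "Pg X" using XA unfolding A_def by auto
  have Xfun: "\<And>u y y'. (u,y)\<in>X \<Longrightarrow> (u,y')\<in>X \<Longrightarrow> y = y'"
    and XV: "\<And>u. u\<in>V \<Longrightarrow> (u, f u) \<in> X"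
    and Xadd: "\<And>u y v z. (u,y)\<in>X \<Longrightarrow> (v,z)\<in>X \<Longrightarrow> (vadd u v, y+z) \<in> X"
    and Xsc: "\<And>u y c. (u,y)\<in>X \<Longrightarrow> (vsc c u, c*y) \<in> X"
    and XB: "\<And>u y. (u,y)\<in>X \<Longrightarrow> u \<in> B"
    and Xp: "\<And>u y. (u,y)\<in>X \<Longrightarrow> y \<le> p u"
    using PX unfolding Pg_def by blast+
  obtain v0 where "v0 \<in> V" using V_ne by blast
  define z0 where "z0 = vsc 0 v0"
  have z0V: "z0 \<in> V" using V_sc \<open>v0\<in>V\<close> unfolding z0_def by auto
  have z0_eq: "z0 = (\<lambda>x. 0)" unfolding z0_def vsc_def by auto
  have total: "\<exists>y. (u,y) \<in> X" if uB: "u \<in> B" for u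
  proof (rule ccontr)
    assume nx: "\<nexists>y. (u, y) \<in> X"
    define x0 where "x0 = u"
    have x0B: "x0 \<in> B" using uB x0_def by simp
    define S where "S = {y - p (vadd w (vsc (-1) x0)) | w y. (w,y)\<in>X}"
    have key: "y - p (vadd w (vsc (-1) x0)) \<le> p (vadd v x0) - z" if "(w,y)\<in>X" "(v,z)\<in>X" for w y v z
    proof -
      have "y + z \<le> p (vadd w v)" using Xadd[OF that] Xp by blast
      also have "vadd w v = vadd (vadd w (vsc (-1) x0)) (vadd v x0)"
        unfolding vadd_def vsc_def by auto
      also have "p \<dots> \<le> p (vadd w (vsc (-1) x0)) + p (vadd v x0)"
        using p_add B_add B_sc XB that x0B by metis
      finally show ?thesis by simp
    qed
    have Sne: "S \<noteq> {}" using XV[OF z0V] unfolding S_def by blast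
    have Sbdd: "bdd_above S"
      unfolding bdd_above_def S_def using key[OF _ XV[OF z0V]] by blast
    define c where "c = Sup S"
    have c_ge: "y - p (vadd w (vsc (-1) x0)) \<le> c" if "(w,y)\<in>X" for w y
      unfolding c_def by (rule cSup_upper[OF _ Sbdd]) (use that S_def in blast)
    have c_le: "c \<le> p (vadd v x0) - z" if "(v,z)\<in>X" for v z
      unfolding c_def by (rule cSup_least[OF Sne]) (use key that S_def in blast)
    define X' where "X' = {(vadd w (vsc t x0), y + t*c) | w y t. (w,y)\<in>X}"
    have dom_ne: "vadd w (vsc t x0) \<noteq> vadd w' (vsc t' x0)" if "(w,y)\<in>X" "(w',y')\<in>X" "t \<noteq> t'"
      for w y t w' y' t'
    proof
      assume eq: "vadd w (vsc t x0) = vadd w' (vsc t' x0)"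
      have "\<And>x. w x + t * x0 x = w' x + t' * x0 x"
        using fun_cong[OF eq] unfolding vadd_def vsc_def by auto
      then have "\<And>x. x0 x = (1 / (t - t')) * (w' x + (-1) * w x)"
        using that(3) by (auto simp: field_simps)
      then have "x0 = vsc (1/(t-t')) (vadd w' (vsc (-1) w))"
        unfolding vadd_def vsc_def by auto
      moreover have "(vsc (1/(t-t')) (vadd w' (vsc (-1) w)), (1/(t-t')) * (y' + (-1)*y)) \<in> X"
        using Xsc Xadd that by blast
      ultimately show False using nx x0_def by auto
    qed
    have "Pg X'"
      unfolding Pg_def
    proof (intro conjI allI impI ballI)
      fix w y y' assume a: "(w,y)\<in>X'" "(w,y')\<in>X'"
      then obtain w1 y1 t1 w2 y2 t2 where
        h: "(w1,y1)\<in>X" "(w2,y2)\<in>X" "w = vadd w1 (vsc t1 x0)" "w = vadd w2 (vsc t2 x0)"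
          "y = y1 + t1*c" "y' = y2 + t2*c"
        unfolding X'_def by blast
      have "t1 = t2" using dom_ne[OF h(1,2), of t1 t2] h(3,4) by auto
      then have "w1 = w2" using h(3,4) unfolding vadd_def vsc_def
        by (metis (no_types, lifting) add_right_cancel ext fun_cong)
      then show "y = y'" using h Xfun \<open>t1 = t2\<close> by auto
    next
      fix w assume "w \<in> V"
      have "(vadd w (vsc 0 x0), f w + 0*c) \<in> X'" using XV[OF \<open>w\<in>V\<close>] unfolding X'_def by blast
      moreover have "vadd w (vsc 0 x0) = w" unfolding vadd_def vsc_def by auto
      ultimately show "(w, f w) \<in> X'" by simp
    next
      fix w y v z assume "(w,y)\<in>X'" "(v,z)\<in>X'"
      then obtain w1 y1 t1 w2 y2 t2 where
        h: "(w1,y1)\<in>X" "(w2,y2)\<in>X" "w = vadd w1 (vsc t1 x0)" "v = vadd w2 (vsc t2 x0)"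
          "y = y1 + t1*c" "z = y2 + t2*c"
        unfolding X'_def by blast
      have "(vadd (vadd w1 w2) (vsc (t1+t2) x0), (y1+y2) + (t1+t2)*c) \<in> X'"
        using Xadd[OF h(1,2)] unfolding X'_def by blast
      moreover have "vadd (vadd w1 w2) (vsc (t1+t2) x0) = vadd w v"
        unfolding h vadd_def vsc_def by (auto simp: algebra_simps)
      ultimately show "(vadd w v, y+z) \<in> X'" using h by (simp add: algebra_simps)
    next
      fix w y a assume "(w,y)\<in>X'"
      then obtain w1 y1 t1 where
        h: "(w1,y1)\<in>X" "w = vadd w1 (vsc t1 x0)" "y = y1 + t1*c"
        unfolding X'_def by blast
      have "(vadd (vsc a w1) (vsc (a*t1) x0), a*y1 + (a*t1)*c) \<in> X'"
        using Xsc[OF h(1)] unfolding X'_def by blast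
      moreover have "vadd (vsc a w1) (vsc (a*t1) x0) = vsc a w"
        unfolding h vadd_def vsc_def by (auto simp: algebra_simps)
      ultimately show "(vsc a w, a*y) \<in> X'" using h by (simp add: algebra_simps)
    next
      fix w y assume "(w,y)\<in>X'"
      then obtain w1 y1 t1 where
        h: "(w1,y1)\<in>X" "w = vadd w1 (vsc t1 x0)" "y = y1 + t1*c"
        unfolding X'_def by blast
      show "w \<in> B" using h XB B_add B_sc x0B by blast
    next
      fix w y assume "(w,y)\<in>X'"
      then obtain w1 y1 t1 where
        h: "(w1,y1)\<in>X" "w = vadd w1 (vsc t1 x0)" "y = y1 + t1*c"
        unfolding X'_def by blast
      have w1B: "w1 \<in> B" using XB h(1) by blast
      consider "t1 = 0" | "t1 > 0" | "t1 < 0" by linarith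
      then show "y \<le> p w"
      proof cases
        case 1
        have "w = w1" using h 1 unfolding vadd_def vsc_def by auto
        then show ?thesis using h 1 Xp by auto
      next
        case 2
        have m: "(vsc (1/t1) w1, (1/t1)*y1) \<in> X" using Xsc h(1) by blast
        have "c \<le> p (vadd (vsc (1/t1) w1) x0) - (1/t1)*y1" using c_le[OF m] .
        then have "t1 * c \<le> t1 * p (vadd (vsc (1/t1) w1) x0) - y1"
          using 2 by (simp add: field_simps mult_left_mono)
        also have "t1 * p (vadd (vsc (1/t1) w1) x0) = p (vsc t1 (vadd (vsc (1/t1) w1) x0))"
          using p_sc[OF _ 2] B_add B_sc w1B x0B by metis
        also have "vsc t1 (vadd (vsc (1/t1) w1) x0) = w"
          unfolding h vadd_def vsc_def using 2 by (auto simp: field_simps)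
        finally show ?thesis using h by simp
      next
        case 3
        define s where "s = - t1"
        have s0: "s > 0" using 3 s_def by simp
        have m: "(vsc (1/s) w1, (1/s)*y1) \<in> X" using Xsc h(1) by blast
        have "(1/s)*y1 - p (vadd (vsc (1/s) w1) (vsc (-1) x0)) \<le> c" using c_ge[OF m] .
        then have "y1 - s * c \<le> s * p (vadd (vsc (1/s) w1) (vsc (-1) x0))"
          using s0 by (simp add: field_simps mult_left_mono)
        also have "s * p (vadd (vsc (1/s) w1) (vsc (-1) x0)) = p (vsc s (vadd (vsc (1/s) w1) (vsc (-1) x0)))"
          using p_sc[OF _ s0] B_add B_sc w1B x0B by metis
        also have "vsc s (vadd (vsc (1/s) w1) (vsc (-1) x0)) = w"
          unfolding h vadd_def vsc_def s_def using s0 s_def by (auto simp: field_simps)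
        finally show ?thesis using h s_def by simp
      qed
    qed
    then have X'A: "X' \<in> A" unfolding A_def by simp
    have "X \<subseteq> X'"
    proof
      fix a assume "a \<in> X"
      then obtain w y where a: "a = (w,y)" "(w,y)\<in>X" by (cases a) auto
      then have "(vadd w (vsc 0 x0), y + 0*c) \<in> X'" unfolding X'_def by blast
      moreover have "vadd w (vsc 0 x0) = w" unfolding vadd_def vsc_def by auto
      ultimately show "a \<in> X'" using a by simp
    qed
    then have "X' = X" using Xmax X'A by blast
    moreover have "(vadd z0 (vsc 1 x0), f z0 + 1*c) \<in> X'" using XV[OF z0V] unfolding X'_def by blast
    moreover have "vadd z0 (vsc 1 x0) = x0" unfolding z0_eq vadd_def vsc_def by auto
    ultimately show False using nx x0_def by auto
  qed
  define F where "F u = (THE y. (u,y) \<in> X)" for u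
  have Fx: "F u = y" if "(u,y) \<in> X" for u y
    unfolding F_def using that Xfun by blast
  have FX: "(u, F u) \<in> X" if "u \<in> B" for u
    using total[OF that] Fx by metis
  show ?thesis
  proof (intro exI[of _ F] conjI ballI allI)
    fix u assume "u \<in> V" then show "F u = f u" using Fx XV by blast
  next
    fix u v assume "u \<in> B" "v \<in> B"
    then show "F (vadd u v) = F u + F v" using Fx Xadd FX by blast
  next
    fix u c assume "u \<in> B"
    then show "F (vsc c u) = c * F u" using Fx Xsc FX by blast
  next
    fix u assume "u \<in> B"
    then show "F u \<le> p u" using Xp FX by blast
  qed
qed




definition pm :: "nat \<Rightarrow> (nat \<Rightarrow> nat) \<Rightarrow> (nat \<Rightarrow> 'a) \<Rightarrow> (nat \<Rightarrow> 'a)" where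
  "pm m \<sigma> y = (\<lambda>i\<in>{..<m}. y (\<sigma> i))"

lemma U_op_pm: "U_op N n g x = (1 / ffact N n) * (\<Sum>\<sigma>\<in>injs n N. g (pm n \<sigma> x))"
  by (simp add: U_op_def pm_def)

lemma space_SB: "space (SB k :: (nat \<Rightarrow> 'a::topological_space) measure) = {..<k} \<rightarrow>\<^sub>E UNIV"
  by (simp add: Sn_def space_PiM)

lemma pm_meas:
  assumes "\<And>i. i < m \<Longrightarrow> \<sigma> i < k"
  shows "(pm m \<sigma> :: (nat \<Rightarrow> 'a::topological_space) \<Rightarrow> _) \<in> measurable (SB k) (SB m)"
  unfolding pm_def Sn_def
  by (intro measurable_restrict measurable_component_singleton) (use assms in auto)

lemma pm_space: "pm m \<sigma> y \<in> space (SB m)"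
  by (simp add: space_SB pm_def)

lemma pm_pm:
  assumes "\<And>i. i < m \<Longrightarrow> \<sigma> i < k"
  shows "pm m \<sigma> (pm k \<pi> y) = pm m (\<pi> \<circ> \<sigma>) y"
  using assms by (auto simp: pm_def fun_eq_iff)

lemma pm_cong: "(\<And>i. i < m \<Longrightarrow> \<sigma> i = \<sigma>' i) \<Longrightarrow> pm m \<sigma> = pm m \<sigma>'"
  by (auto simp: pm_def fun_eq_iff)

lemma pm_id: "pm n id = (\<lambda>y. \<lambda>i\<in>{..<n}. y i)"
  by (auto simp: pm_def fun_eq_iff)

lemma injs_lt: "\<sigma> \<in> injs n N \<Longrightarrow> i < n \<Longrightarrow> \<sigma> i < N"
  by (auto simp: injs_def)

lemma finite_injs: "finite (injs n N)"
proof -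
  have "injs n N \<subseteq> {..<n} \<rightarrow>\<^sub>E {..<N}" by (auto simp: injs_def)
  then show ?thesis by (rule finite_subset) (auto intro: finite_PiE)
qed

lemma card_injs: "card (injs n N) = (\<Prod>i<n. N - i)"
proof -
  have "injs n N = {f \<in> {..<n} \<rightarrow>\<^sub>E {..<N}. inj_on f {..<n}}" by (auto simp: injs_def)
  then have "card (injs n N) = N ^ (n - n) * prod ((-) N) {0..<n}"
    using card_inj_on_subset_funcset[of "{..<n}" "{..<N}" "{..<n}"] by simp
  then show ?thesis by (simp add: atLeast0LessThan)
qed

lemma ffact_card: "ffact N n = real (card (injs n N))"
  by (simp add: ffact_def card_injs)

lemma ffact_pos: "n \<le> N \<Longrightarrow> ffact N n > 0"
  unfolding ffact_def by (intro prod_pos) auto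

lemma extend_perm:
  assumes s: "\<sigma> \<in> injs n N" and nN: "n \<le> N"
  shows "\<exists>\<pi>. \<pi> permutes {..<N} \<and> (\<forall>i<n. \<pi> i = \<sigma> i)"
proof -
  have sm: "\<sigma> \<in> {..<n} \<rightarrow> {..<N}" and si: "inj_on \<sigma> {..<n}" using s by (auto simp: injs_def)
  define A where "A = {..<N} - {..<n}"
  define B where "B = {..<N} - \<sigma> ` {..<n}"
  have cA: "card A = N - n" unfolding A_def using nN by (simp add: card_Diff_subset)
  have sub: "\<sigma> ` {..<n} \<subseteq> {..<N}" using sm by auto
  have cB: "card B = N - n" unfolding B_def
    using card_Diff_subset[OF finite_imageI[of "{..<n}" \<sigma>] sub] card_image[OF si] by simp
  obtain h where h: "bij_betw h A B"
    using finite_same_card_bij[of A B] cA cB unfolding A_def B_def by auto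
  have b1: "bij_betw \<sigma> {..<n} (\<sigma> ` {..<n})" using si by (simp add: bij_betw_imageI)
  have "bij_betw (\<lambda>x. if x \<in> {..<n} then \<sigma> x else h x) ({..<n} \<union> A) (\<sigma> ` {..<n} \<union> B)"
    by (rule bij_betw_disjoint_Un[OF b1 h]) (auto simp: A_def B_def)
  moreover have "{..<n} \<union> A = {..<N}" using nN unfolding A_def by auto
  moreover have "\<sigma> ` {..<n} \<union> B = {..<N}" using sub unfolding B_def by auto
  ultimately have bb: "bij_betw (\<lambda>x. if x \<in> {..<n} then \<sigma> x else h x) {..<N} {..<N}" by simp
  define \<pi> where "\<pi> x = (if x \<in> {..<n} then \<sigma> x else if x < N then h x else x)" for x
  have "bij_betw \<pi> {..<N} {..<N}"
    by (rule bij_betw_cong[THEN iffD1, OF _ bb]) (auto simp: \<pi>_def)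
  then have "\<pi> permutes {..<N}" by (rule bij_imp_permutes) (use nN in \<open>auto simp: \<pi>_def\<close>)
  then show ?thesis by (intro exI[of _ \<pi>]) (auto simp: \<pi>_def)
qed

lemma U_sym:
  assumes p: "\<pi> permutes {..<N}"
  shows "U_op N n g (pm N \<pi> x) = U_op N n g x"
proof -
  have "(\<Sum>\<sigma>\<in>injs n N. g (pm n \<sigma> (pm N \<pi> x))) = (\<Sum>\<sigma>\<in>injs n N. g (pm n (restrict (\<pi> \<circ> \<sigma>) {..<n}) x))"
    by (intro sum.cong refl arg_cong[where f=g]) (auto simp: pm_pm injs_lt intro: pm_cong[THEN fun_cong])
  also have "\<dots> = (\<Sum>\<tau>\<in>injs n N. g (pm n \<tau> x))"
  proof (rule sum.reindex_bij_betw)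
    show "bij_betw (\<lambda>\<sigma>. restrict (\<pi> \<circ> \<sigma>) {..<n}) (injs n N) (injs n N)"
    proof (rule bij_betw_byWitness[where f' = "\<lambda>\<tau>. restrict (inv \<pi> \<circ> \<tau>) {..<n}"])
      show "\<forall>a\<in>injs n N. restrict (inv \<pi> \<circ> restrict (\<pi> \<circ> a) {..<n}) {..<n} = a"
        using permutes_inverses[OF p] by (auto simp: injs_def fun_eq_iff PiE_def extensional_def)
      show "\<forall>a'\<in>injs n N. restrict (\<pi> \<circ> restrict (inv \<pi> \<circ> a') {..<n}) {..<n} = a'"
        using permutes_inverses[OF p] by (auto simp: injs_def fun_eq_iff PiE_def extensional_def)
      show "(\<lambda>\<sigma>. restrict (\<pi> \<circ> \<sigma>) {..<n}) ` injs n N \<subseteq> injs n N"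
        using permutes_in_image[OF p] permutes_inj[OF p]
        by (auto simp: injs_def inj_on_def inj_def)
      show "(\<lambda>\<tau>. restrict (inv \<pi> \<circ> \<tau>) {..<n}) ` injs n N \<subseteq> injs n N"
        using permutes_in_image[OF permutes_inv[OF p]] permutes_inj[OF permutes_inv[OF p]]
        by (auto simp: injs_def inj_on_def inj_def)
    qed
  qed
  finally show ?thesis by (simp add: U_op_pm)
qed




lemma bounded_bound: "bounded (g ` S) \<Longrightarrow> \<exists>B. \<forall>x\<in>S. \<bar>g x :: real\<bar> \<le> B"
  by (auto simp: bounded_iff)

lemma integrable_bdd:
  assumes "prob_space Q" "f \<in> borel_measurable Q" "\<And>x. x\<in>space Q \<Longrightarrow> \<bar>f x :: real\<bar> \<le> c"
  shows "integrable Q f"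
proof -
  interpret prob_space Q by fact
  show ?thesis by (rule integrable_const_bound[of _ c]) (use assms in auto)
qed

lemma prob_abs_le:
  assumes "prob_space Q" "f \<in> borel_measurable Q" "\<And>x. x\<in>space Q \<Longrightarrow> \<bar>f x :: real\<bar> \<le> c"
  shows "\<bar>integral\<^sup>L Q f\<bar> \<le> c"
proof -
  interpret prob_space Q by fact
  have i: "integrable Q f" by (rule integrable_bdd[OF assms])
  have "integral\<^sup>L Q f \<le> c"
    by (rule integral_le_const[OF i]) (use assms(3) in \<open>auto simp: abs_le_iff\<close>)
  moreover have "integral\<^sup>L Q (\<lambda>x. - f x) \<le> c"
    by (rule integral_le_const) (use i assms(3) in \<open>auto simp: abs_le_iff\<close>)
  ultimately show ?thesis by (simp add: abs_le_iff)
qed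

lemma U_meas:
  assumes "g \<in> borel_measurable (SB n)"
  shows "U_op N n g \<in> borel_measurable (SB N)"
  unfolding U_op_pm[abs_def]
  by (intro borel_measurable_times borel_measurable_const borel_measurable_sum
        measurable_compose[OF pm_meas assms]) (auto dest: injs_lt)

lemma U_bound:
  assumes "\<And>z. z \<in> space (SB n) \<Longrightarrow> \<bar>g z\<bar> \<le> B" "n \<le> N"
  shows "\<bar>U_op N n g x\<bar> \<le> B"
proof -
  have "\<bar>\<Sum>\<sigma>\<in>injs n N. g (pm n \<sigma> x)\<bar> \<le> (\<Sum>\<sigma>\<in>injs n N. B)"
    by (rule order_trans[OF sum_abs sum_mono]) (use assms(1) pm_space in auto)
  then have "\<bar>\<Sum>\<sigma>\<in>injs n N. g (pm n \<sigma> x)\<bar> \<le> ffact N n * B" by (simp add: ffact_card)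
  then show ?thesis using ffact_pos[OF assms(2)]
    by (simp add: U_op_pm abs_mult field_simps)
qed

lemma U_one: "n \<le> N \<Longrightarrow> U_op N n (\<lambda>_. 1) x = 1"
  using ffact_pos[of n N] by (simp add: U_op_pm ffact_card)

lemma easy_integral:
  assumes nN: "n \<le> N" and Q: "prob_space Q" "sets Q = sets (SB N)" "exchangeable_law N Q"
    and g: "g \<in> borel_measurable (SB n)" "bounded (g ` space (SB n))"
  shows "integral\<^sup>L Q (U_op N n g) = integral\<^sup>L Q (\<lambda>y. g (pm n id y))"
proof -
  obtain Bd where Bd: "\<And>z. z \<in> space (SB n) \<Longrightarrow> \<bar>g z\<bar> \<le> Bd" using bounded_bound[OF g(2)] by blast
  have sQ: "space Q = space (SB N)" using Q(2) by (rule sets_eq_imp_space_eq)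
  note mQ = measurable_cong_sets[OF Q(2) refl]
  have gm: "(\<lambda>y. g (pm n \<sigma> y)) \<in> borel_measurable Q" if "\<And>i. i < n \<Longrightarrow> \<sigma> i < N" for \<sigma>
    unfolding mQ by (rule measurable_compose[OF pm_meas g(1)]) (use that in auto)
  have gi: "integrable Q (\<lambda>y. g (pm n \<sigma> y))" if "\<And>i. i < n \<Longrightarrow> \<sigma> i < N" for \<sigma>
    by (rule integrable_bdd[OF Q(1) gm[OF that], where c=Bd]) (use Bd pm_space in auto)
  have each: "integral\<^sup>L Q (\<lambda>y. g (pm n \<sigma> y)) = integral\<^sup>L Q (\<lambda>y. g (pm n id y))"
    if s: "\<sigma> \<in> injs n N" for \<sigma>
  proof -
    obtain \<pi> where p: "\<pi> permutes {..<N}" "\<forall>i<n. \<pi> i = \<sigma> i" using extend_perm[OF s nN] by blast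
    have piN: "\<And>i. i < N \<Longrightarrow> \<pi> i < N" using permutes_in_image[OF p(1)] by auto
    have e1: "pm n \<sigma> y = pm n id (pm N \<pi> y)" for y :: "nat \<Rightarrow> 'a"
      using pm_pm[of n id N \<pi> y] nN p(2) by (auto intro!: pm_cong[THEN fun_cong])
    have ex: "distr Q (SB N) (pm N \<pi>) = Q"
      using Q(3) p(1) unfolding exchangeable_law_def pm_def by auto
    have pmm: "pm N \<pi> \<in> measurable Q (SB N)" unfolding mQ by (rule pm_meas) (use piN in auto)
    have "integral\<^sup>L Q (\<lambda>y. g (pm n \<sigma> y)) = integral\<^sup>L Q (\<lambda>y. g (pm n id (pm N \<pi> y)))"
      by (simp add: e1)
    also have "\<dots> = integral\<^sup>L (distr Q (SB N) (pm N \<pi>)) (\<lambda>y. g (pm n id y))"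
      by (rule integral_distr[symmetric, OF pmm]) (rule measurable_compose[OF pm_meas g(1)], use nN in auto)
    also have "\<dots> = integral\<^sup>L Q (\<lambda>y. g (pm n id y))" by (simp add: ex)
    finally show ?thesis .
  qed
  have "integral\<^sup>L Q (U_op N n g) = (1 / ffact N n) * (\<Sum>\<sigma>\<in>injs n N. integral\<^sup>L Q (\<lambda>y. g (pm n \<sigma> y)))"
    unfolding U_op_pm
  proof (subst integral_mult_right_zero)
    show "1 / ffact N n * integral\<^sup>L Q (\<lambda>x. \<Sum>\<sigma>\<in>injs n N. g (pm n \<sigma> x)) =
      1 / ffact N n * (\<Sum>\<sigma>\<in>injs n N. integral\<^sup>L Q (\<lambda>y. g (pm n \<sigma> y)))"
    proof -
      have "integral\<^sup>L Q (\<lambda>x. \<Sum>\<sigma>\<in>injs n N. g (pm n \<sigma> x)) = (\<Sum>\<sigma>\<in>injs n N. integral\<^sup>L Q (\<lambda>y. g (pm n \<sigma> y)))"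
        by (rule Bochner_Integration.integral_sum) (auto intro!: gi dest: injs_lt)
      then show ?thesis by simp
    qed
  qed
  also have "\<dots> = (1 / ffact N n) * (\<Sum>\<sigma>\<in>injs n N. integral\<^sup>L Q (\<lambda>y. g (pm n id y)))"
    using each by simp
  also have "\<dots> = integral\<^sup>L Q (\<lambda>y. g (pm n id y))"
    using ffact_pos[OF nN] by (simp add: ffact_card)
  finally show ?thesis .
qed

lemma easy_dir:
  assumes ext: "extendible M n N X" and M: "prob_space M" and Xm: "X \<in> measurable M (SB n)" and nN: "n \<le> N"
    and g: "g \<in> borel_measurable (SB n)" "bounded (g ` space (SB n))"
    and U1: "\<forall>x\<in>space (SB N). \<bar>U_op N n g x\<bar> \<le> 1"
  shows "\<bar>integral\<^sup>L M (\<lambda>w. g (X w))\<bar> \<le> 1"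
proof -
  obtain Q where Q: "prob_space Q" "sets Q = sets (SB N)" "exchangeable_law N Q"
    "distr Q (SB n) (\<lambda>y. \<lambda>i\<in>{..<n}. y i) = distr M (SB n) X"
    using ext unfolding extendible_def by blast
  have sQ: "space Q = space (SB N)" using Q(2) by (rule sets_eq_imp_space_eq)
  note mQ = measurable_cong_sets[OF Q(2) refl]
  have pmm: "pm n id \<in> measurable Q (SB n)" unfolding mQ by (rule pm_meas) (use nN in auto)
  have "integral\<^sup>L M (\<lambda>w. g (X w)) = integral\<^sup>L (distr M (SB n) X) g"
    by (rule integral_distr[symmetric, OF Xm g(1)])
  also have "\<dots> = integral\<^sup>L (distr Q (SB n) (pm n id)) g" using Q(4) by (simp add: pm_id)
  also have "\<dots> = integral\<^sup>L Q (\<lambda>y. g (pm n id y))" by (rule integral_distr[OF pmm g(1)])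
  also have "\<dots> = integral\<^sup>L Q (U_op N n g)" by (rule easy_integral[symmetric, OF nN Q(1-3) g])
  finally have eq: "integral\<^sup>L M (\<lambda>w. g (X w)) = integral\<^sup>L Q (U_op N n g)" .
  have "\<bar>integral\<^sup>L Q (U_op N n g)\<bar> \<le> 1"
    by (rule prob_abs_le[OF Q(1)]) (use U_meas[OF g(1)] mQ U1 sQ in auto)
  then show ?thesis using eq by simp
qed

lemma ext_norm_eq1_iff:
  fixes X :: "'w \<Rightarrow> nat \<Rightarrow> 'a::topological_space"
  assumes M: "prob_space M" and Xm: "X \<in> measurable M (SB n)" and nN: "n \<le> N"
  shows "ext_norm M n N X = 1 \<longleftrightarrow>
    (\<forall>g :: (nat \<Rightarrow> 'a) \<Rightarrow> real. g \<in> borel_measurable (SB n) \<longrightarrow> bounded (g ` space (SB n)) \<longrightarrow>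
       (\<forall>x\<in>space (SB N). \<bar>U_op N n g x\<bar> \<le> 1) \<longrightarrow> \<bar>integral\<^sup>L M (\<lambda>w. g (X w))\<bar> \<le> 1)"
    (is "?L \<longleftrightarrow> ?R")
proof -
  let ?G = "{g :: (nat \<Rightarrow> 'a) \<Rightarrow> real. g \<in> borel_measurable (SB n) \<and> bounded (g ` space (SB n)) \<and>
                 (\<forall>x\<in>space (SB N). \<bar>U_op N n g x\<bar> \<le> 1)}"
  have one: "(\<lambda>_. 1) \<in> ?G" 
  proof -
    have "U_op N n (\<lambda>_::(nat \<Rightarrow> 'a). 1::real) x = 1" for x :: "nat \<Rightarrow> 'a" by (rule U_one[OF nN])
    then show ?thesis by (auto intro: bounded_subset[of "{1}"])
  qed
  have v1: "integral\<^sup>L M (\<lambda>w. (\<lambda>_. 1::real) (X w)) = 1"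
  proof -
    interpret prob_space M by fact
    have "measure M (space M) = 1" using prob_space by simp
    then show ?thesis by simp
  qed
  have ge: "1 \<le> ext_norm M n N X"
    unfolding ext_norm_def by (rule SUP_upper2[OF one]) (simp only: v1, simp)
  show ?thesis
  proof
    assume L: ?L
    show ?R
    proof (intro allI impI)
      fix g :: "(nat \<Rightarrow> 'a) \<Rightarrow> real" assume "g \<in> borel_measurable (SB n)" "bounded (g ` space (SB n))"
        "\<forall>x\<in>space (SB N). \<bar>U_op N n g x\<bar> \<le> 1"
      then have "g \<in> ?G" by auto
      then have "ereal \<bar>integral\<^sup>L M (\<lambda>w. g (X w))\<bar> \<le> ext_norm M n N X"
        unfolding ext_norm_def by (rule SUP_upper)
      then show "\<bar>integral\<^sup>L M (\<lambda>w. g (X w))\<bar> \<le> 1" using L by simp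
    qed
  next
    assume R: ?R
    have "ext_norm M n N X \<le> 1"
      unfolding ext_norm_def by (rule SUP_least) (use R in auto)
    then show ?L using ge by simp
  qed
qed




lemma lin_sum:
  fixes Bs :: "('b \<Rightarrow> real) set" and \<Psi> :: "('b \<Rightarrow> real) \<Rightarrow> real"
  assumes add: "\<And>u v. u \<in> Bs \<Longrightarrow> v \<in> Bs \<Longrightarrow> \<Psi> (vadd u v) = \<Psi> u + \<Psi> v"
    and sc: "\<And>u c. u \<in> Bs \<Longrightarrow> \<Psi> (vsc c u) = c * \<Psi> u"
    and Badd: "\<And>u v. u \<in> Bs \<Longrightarrow> v \<in> Bs \<Longrightarrow> vadd u v \<in> Bs"
    and Bsc: "\<And>u c. u \<in> Bs \<Longrightarrow> vsc c u \<in> Bs"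
    and ne: "u0 \<in> Bs"
  shows "finite I \<Longrightarrow> (\<And>i. i \<in> I \<Longrightarrow> f i \<in> Bs) \<Longrightarrow>
     (\<lambda>y. \<Sum>i\<in>I. f i y) \<in> Bs \<and> \<Psi> (\<lambda>y. \<Sum>i\<in>I. f i y) = (\<Sum>i\<in>I. \<Psi> (f i))"
proof (induction I rule: finite_induct)
  case empty
  have z: "vsc 0 u0 = (\<lambda>y. 0)" by (simp add: vsc_def)
  have "vsc 0 u0 \<in> Bs" "\<Psi> (vsc 0 u0) = 0" using Bsc sc ne by auto
  then show ?case using z by simp
next
  case (insert x F)
  then have IH: "(\<lambda>y. \<Sum>i\<in>F. f i y) \<in> Bs" "\<Psi> (\<lambda>y. \<Sum>i\<in>F. f i y) = (\<Sum>i\<in>F. \<Psi> (f i))" by auto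
  have e: "(\<lambda>y. \<Sum>i\<in>insert x F. f i y) = vadd (f x) (\<lambda>y. \<Sum>i\<in>F. f i y)"
    using insert by (simp add: vadd_def)
  show ?case unfolding e using IH insert Badd add by auto
qed

locale hard =
  fixes M :: "'w measure" and X :: "'w \<Rightarrow> nat \<Rightarrow> 'a::t2_space" and n N :: nat
  assumes n0: "0 < n" and nN: "n \<le> N" and M: "prob_space M" and Xm: "X \<in> measurable M (SB n)"
    and tight: "tight_measure (distr M borel (\<lambda>w. X w 0))"
    and oreg: "outer_regular (distr M borel (\<lambda>w. X w 0))"
    and norm1: "\<And>g :: (nat \<Rightarrow> 'a) \<Rightarrow> real. g \<in> borel_measurable (SB n) \<Longrightarrow> bounded (g ` space (SB n)) \<Longrightarrow>
        (\<forall>x\<in>space (SB N). \<bar>U_op N n g x\<bar> \<le> 1) \<Longrightarrow> \<bar>integral\<^sup>L M (\<lambda>w. g (X w))\<bar> \<le> 1"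
begin

definition "\<Omega> = space (SB N :: (nat \<Rightarrow> 'a) measure)"
definition "Bs = {h :: (nat \<Rightarrow> 'a) \<Rightarrow> real. h \<in> borel_measurable (SB N) \<and> bounded (h ` \<Omega>)}"
definition "Gs = {g :: (nat \<Rightarrow> 'a) \<Rightarrow> real. g \<in> borel_measurable (SB n) \<and> bounded (g ` space (SB n))}"
definition "E (g :: (nat \<Rightarrow> 'a) \<Rightarrow> real) = integral\<^sup>L M (\<lambda>w. g (X w))"
definition "pn (h :: (nat \<Rightarrow> 'a) \<Rightarrow> real) = (SUP x\<in>\<Omega>. \<bar>h x\<bar>)"
definition "Vs = {U_op N n g | g. g \<in> Gs}"

lemma Omega_ne: "\<Omega> \<noteq> {}"
  by (auto simp: \<Omega>_def space_SB)

lemma bdd_abs: "bounded (h ` S) \<Longrightarrow> bdd_above ((\<lambda>x. \<bar>h x :: real\<bar>) ` S)"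
  by (auto simp: bounded_iff bdd_above_def)

lemma pn_ge: "h \<in> Bs \<Longrightarrow> x \<in> \<Omega> \<Longrightarrow> \<bar>h x\<bar> \<le> pn h"
  unfolding pn_def Bs_def by (rule cSUP_upper) (auto intro: bdd_abs)

lemma pn_le: "(\<And>x. x \<in> \<Omega> \<Longrightarrow> \<bar>h x\<bar> \<le> c) \<Longrightarrow> pn h \<le> c"
  unfolding pn_def by (rule cSUP_least[OF Omega_ne])

lemma pn_nonneg: "h \<in> Bs \<Longrightarrow> 0 \<le> pn h"
proof -
  assume h: "h \<in> Bs"
  obtain x where "x \<in> \<Omega>" using Omega_ne by blast
  then have "\<bar>h x\<bar> \<le> pn h" by (rule pn_ge[OF h])
  then show ?thesis by (rule order_trans[OF abs_ge_zero])
qed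

lemma Bs_add: "u \<in> Bs \<Longrightarrow> v \<in> Bs \<Longrightarrow> vadd u v \<in> Bs"
proof -
  assume u: "u \<in> Bs" and v: "v \<in> Bs"
  have "\<bar>u x + v x\<bar> \<le> pn u + pn v" if "x \<in> \<Omega>" for x
    by (rule order_trans[OF abs_triangle_ineq add_mono[OF pn_ge[OF u that] pn_ge[OF v that]]])
  then have "bounded (vadd u v ` \<Omega>)" unfolding bounded_iff vadd_def by auto
  then show ?thesis using u v unfolding Bs_def vadd_def by auto
qed

lemma Bs_sc: "u \<in> Bs \<Longrightarrow> vsc c u \<in> Bs"
proof -
  assume u: "u \<in> Bs"
  have "\<And>x. x \<in> \<Omega> \<Longrightarrow> \<bar>c * u x\<bar> \<le> \<bar>c\<bar> * pn u"
    using pn_ge[OF u] by (simp add: abs_mult mult_left_mono)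
  then have "bounded (vsc c u ` \<Omega>)" unfolding bounded_iff vsc_def by auto
  then show ?thesis using u unfolding Bs_def vsc_def by auto
qed

lemma Gs_add: "u \<in> Gs \<Longrightarrow> v \<in> Gs \<Longrightarrow> vadd u v \<in> Gs"
proof -
  assume u: "u \<in> Gs" and v: "v \<in> Gs"
  obtain a b where "\<forall>x\<in>space (SB n). \<bar>u x\<bar> \<le> a" "\<forall>x\<in>space (SB n). \<bar>v x\<bar> \<le> b"
    using bounded_bound[of u "space (SB n)"] bounded_bound[of v "space (SB n)"] u v unfolding Gs_def by blast
  then have "\<And>x. x \<in> space (SB n) \<Longrightarrow> \<bar>u x + v x\<bar> \<le> a + b"
    by (meson abs_triangle_ineq add_mono order_trans)
  then have "bounded (vadd u v ` space (SB n))" unfolding bounded_iff vadd_def by auto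
  then show ?thesis using u v unfolding Gs_def vadd_def by auto
qed

lemma Gs_sc: "u \<in> Gs \<Longrightarrow> vsc c u \<in> Gs"
proof -
  assume u: "u \<in> Gs"
  obtain a where a: "\<forall>x\<in>space (SB n). \<bar>u x\<bar> \<le> a"
    using bounded_bound[of u "space (SB n)"] u unfolding Gs_def by blast
  have "\<And>x. x \<in> space (SB n) \<Longrightarrow> \<bar>c * u x\<bar> \<le> \<bar>c\<bar> * a"
    using a by (simp add: abs_mult mult_left_mono)
  then have "bounded (vsc c u ` space (SB n))" unfolding bounded_iff vsc_def by auto
  then show ?thesis using u unfolding Gs_def vsc_def by auto
qed

lemma Gs_bound: "g \<in> Gs \<Longrightarrow> \<exists>B. \<forall>x\<in>space (SB n). \<bar>g x\<bar> \<le> B"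
  unfolding Gs_def using bounded_bound[of g "space (SB n)"] by blast

lemma E_integrable: "g \<in> Gs \<Longrightarrow> integrable M (\<lambda>w. g (X w))"
proof -
  assume g: "g \<in> Gs"
  obtain B where B: "\<forall>x\<in>space (SB n). \<bar>g x\<bar> \<le> B" using Gs_bound[OF g] by blast
  show ?thesis
    by (rule integrable_bdd[OF M _, of _ B])
       (use g B measurable_space[OF Xm] in \<open>auto simp: Gs_def intro: measurable_compose[OF Xm]\<close>)
qed

lemma E_add: "u \<in> Gs \<Longrightarrow> v \<in> Gs \<Longrightarrow> E (vadd u v) = E u + E v"
  unfolding E_def vadd_def by (rule Bochner_Integration.integral_add) (auto intro: E_integrable)

lemma E_sc: "E (vsc c u) = c * E u"
  unfolding E_def vsc_def by simp

lemma U_add: "U_op N n (vadd u v) = vadd (U_op N n u) (U_op N n v)"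
  by (simp add: U_op_def vadd_def sum.distrib fun_eq_iff algebra_simps)

lemma U_sc: "U_op N n (vsc c u) = vsc c (U_op N n u)"
  by (simp add: U_op_def vsc_def sum_distrib_left fun_eq_iff algebra_simps)

lemma U_Bs: "g \<in> Gs \<Longrightarrow> U_op N n g \<in> Bs"
proof -
  assume g: "g \<in> Gs"
  obtain B where B: "\<forall>x\<in>space (SB n). \<bar>g x\<bar> \<le> B" using Gs_bound[OF g] by blast
  have "\<And>x. \<bar>U_op N n g x\<bar> \<le> B" by (rule U_bound[OF _ nN]) (use B in auto)
  then have "bounded (U_op N n g ` \<Omega>)" unfolding bounded_iff by auto
  then show ?thesis using U_meas g unfolding Bs_def Gs_def by auto
qed

lemma E_bound: "g \<in> Gs \<Longrightarrow> \<bar>E g\<bar> \<le> pn (U_op N n g)"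
proof -
  assume g: "g \<in> Gs"
  define s where "s = pn (U_op N n g)"
  have s0: "0 \<le> s" using pn_nonneg[OF U_Bs[OF g]] s_def by simp
  have Ug: "\<And>x. x \<in> \<Omega> \<Longrightarrow> \<bar>U_op N n g x\<bar> \<le> s" using pn_ge[OF U_Bs[OF g]] s_def by simp
  have scaled: "\<bar>t * E g\<bar> \<le> 1" if "\<And>x. x \<in> \<Omega> \<Longrightarrow> \<bar>t * U_op N n g x\<bar> \<le> 1" for t
  proof -
    have "vsc t g \<in> Gs" using Gs_sc[OF g] .
    moreover have "\<forall>x\<in>space (SB N). \<bar>U_op N n (vsc t g) x\<bar> \<le> 1"
      unfolding U_sc using that by (simp add: vsc_def \<Omega>_def)
    ultimately have "\<bar>E (vsc t g)\<bar> \<le> 1" using norm1 unfolding Gs_def E_def by blast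
    then show ?thesis by (simp add: E_sc)
  qed
  show ?thesis
  proof (cases "s = 0")
    case True
    show ?thesis
    proof (rule ccontr)
      assume "\<not> ?thesis"
      then have ne: "E g \<noteq> 0" using True s_def by simp
      have "\<bar>(2 / \<bar>E g\<bar>) * E g\<bar> \<le> 1"
        by (rule scaled) (use Ug True in auto)
      then show False using ne by (simp add: abs_mult)
    qed
  next
    case False
    then have sp: "s > 0" using s0 by simp
    have "\<bar>(1/s) * E g\<bar> \<le> 1"
      by (rule scaled) (use Ug sp in \<open>auto simp: abs_mult field_simps\<close>)
    then show ?thesis using sp s_def by (simp add: abs_mult field_simps)
  qed
qed

definition "fV h = E (SOME g. g \<in> Gs \<and> h = U_op N n g)"

lemma fV_eq: "g \<in> Gs \<Longrightarrow> fV (U_op N n g) = E g"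
proof -
  assume g: "g \<in> Gs"
  define g' where "g' = (SOME g'. g' \<in> Gs \<and> U_op N n g = U_op N n g')"
  have g': "g' \<in> Gs" "U_op N n g = U_op N n g'" unfolding g'_def by (rule someI2[of _ g], use g in auto)+
  define d where "d = vadd g' (vsc (-1) g)"
  have dG: "d \<in> Gs" unfolding d_def using g g' Gs_add Gs_sc by blast
  have "U_op N n d = (\<lambda>x. 0)" unfolding d_def U_add U_sc using g'(2) by (simp add: vadd_def vsc_def)
  then have "pn (U_op N n d) = 0" unfolding pn_def using Omega_ne by simp
  then have "E d = 0" using E_bound[OF dG] by simp
  then have "E g' = E g" unfolding d_def using E_add[OF g'(1) Gs_sc[OF g]] E_sc by simp
  then show ?thesis unfolding fV_def g'_def by simp
qed

lemma pn_add: "u \<in> Bs \<Longrightarrow> v \<in> Bs \<Longrightarrow> pn (vadd u v) \<le> pn u + pn v"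
proof (rule pn_le)
  fix x assume u: "u \<in> Bs" and v: "v \<in> Bs" and x: "x \<in> \<Omega>"
  show "\<bar>vadd u v x\<bar> \<le> pn u + pn v" unfolding vadd_def
    by (rule order_trans[OF abs_triangle_ineq add_mono[OF pn_ge[OF u x] pn_ge[OF v x]]])
qed

lemma pn_sc: "u \<in> Bs \<Longrightarrow> c > 0 \<Longrightarrow> pn (vsc c u) = c * pn u"
proof -
  assume u: "u \<in> Bs" and c: "c > 0"
  have "pn (vsc c u) \<le> c * pn u"
    by (rule pn_le) (use pn_ge[OF u] c in \<open>auto simp: vsc_def abs_mult\<close>)
  moreover have "pn u \<le> pn (vsc c u) / c"
    by (rule pn_le) (use pn_ge[OF Bs_sc[OF u, of c]] c in \<open>auto simp: vsc_def abs_mult field_simps\<close>)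
  ultimately show ?thesis using c by (simp add: field_simps)
qed

lemma Vs_sub: "Vs \<subseteq> Bs" using U_Bs unfolding Vs_def by auto

lemma const_Gs: "(\<lambda>_. c) \<in> Gs"
  unfolding Gs_def by (auto intro: bounded_subset[of "{c}"])

lemma VsE: "u \<in> Vs \<Longrightarrow> (\<And>g. g \<in> Gs \<Longrightarrow> u = U_op N n g \<Longrightarrow> P) \<Longrightarrow> P"
  unfolding Vs_def by blast

lemma VsI: "g \<in> Gs \<Longrightarrow> U_op N n g \<in> Vs"
  unfolding Vs_def by blast

lemma exists_F:
  "\<exists>F. (\<forall>g\<in>Gs. F (U_op N n g) = E g) \<and> (\<forall>u\<in>Bs. \<forall>v\<in>Bs. F (vadd u v) = F u + F v)
      \<and> (\<forall>u\<in>Bs. \<forall>c. F (vsc c u) = c * F u) \<and> (\<forall>u\<in>Bs. F u \<le> pn u)"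
proof -
  have "\<exists>F. (\<forall>u\<in>Vs. F u = fV u) \<and> (\<forall>u\<in>Bs. \<forall>v\<in>Bs. F (vadd u v) = F u + F v)
           \<and> (\<forall>u\<in>Bs. \<forall>c. F (vsc c u) = c * F u) \<and> (\<forall>u\<in>Bs. F u \<le> pn u)"
  proof (rule HB)
    show "\<And>u v. u \<in> Bs \<Longrightarrow> v \<in> Bs \<Longrightarrow> vadd u v \<in> Bs" by (rule Bs_add)
    show "\<And>c u. u \<in> Bs \<Longrightarrow> vsc c u \<in> Bs" by (rule Bs_sc)
    show "Vs \<subseteq> Bs" by (rule Vs_sub)
    show "vadd u v \<in> Vs" if uv: "u \<in> Vs" "v \<in> Vs" for u v
    proof -
      obtain g where g1: "g \<in> Gs" "u = U_op N n g" by (rule VsE[OF uv(1)])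
      obtain g' where g2: "g' \<in> Gs" "v = U_op N n g'" by (rule VsE[OF uv(2)])
      have "g \<in> Gs" "g' \<in> Gs" "u = U_op N n g" "v = U_op N n g'"
        using g1 g2 by blast+
      then show ?thesis using VsI[OF Gs_add] U_add by metis
    qed
    show "vsc c u \<in> Vs" if uv: "u \<in> Vs" for c u
    proof -
      obtain g where "g \<in> Gs" "u = U_op N n g" by (rule VsE[OF uv])
      then show ?thesis using VsI[OF Gs_sc] U_sc by metis
    qed
    show "Vs \<noteq> {}" using VsI[OF const_Gs] by blast
    show "fV (vadd u v) = fV u + fV v" if uv: "u \<in> Vs" "v \<in> Vs" for u v
    proof -
      obtain g where g1: "g \<in> Gs" "u = U_op N n g" by (rule VsE[OF uv(1)])
      obtain g' where g2: "g' \<in> Gs" "v = U_op N n g'" by (rule VsE[OF uv(2)])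
      have g: "g \<in> Gs" "g' \<in> Gs" "u = U_op N n g" "v = U_op N n g'"
        using g1 g2 by blast+
      have "vadd u v = U_op N n (vadd g g')" by (simp add: g U_add)
      then show ?thesis using fV_eq Gs_add E_add g by simp
    qed
    show "fV (vsc c u) = c * fV u" if uv: "u \<in> Vs" for c u
    proof -
      obtain g where g: "g \<in> Gs" "u = U_op N n g" by (rule VsE[OF uv])
      have "vsc c u = U_op N n (vsc c g)" by (simp add: g U_sc)
      then show ?thesis using fV_eq Gs_sc E_sc g by simp
    qed
    show "\<And>u v. u \<in> Bs \<Longrightarrow> v \<in> Bs \<Longrightarrow> pn (vadd u v) \<le> pn u + pn v" by (rule pn_add)
    show "\<And>c u. u \<in> Bs \<Longrightarrow> 0 < c \<Longrightarrow> pn (vsc c u) = c * pn u" by (rule pn_sc)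
    show "fV u \<le> pn u" if uv: "u \<in> Vs" for u
    proof -
      obtain g where g: "g \<in> Gs" "u = U_op N n g" by (rule VsE[OF uv])
      then show ?thesis using fV_eq[OF g(1)] E_bound[OF g(1)] by simp
    qed
  qed
  then obtain F where F: "\<forall>u\<in>Vs. F u = fV u" "\<forall>u\<in>Bs. \<forall>v\<in>Bs. F (vadd u v) = F u + F v"
      "\<forall>u\<in>Bs. \<forall>c. F (vsc c u) = c * F u" "\<forall>u\<in>Bs. F u \<le> pn u" by blast
  have "\<forall>g\<in>Gs. F (U_op N n g) = E g" using F(1) VsI fV_eq by simp
  then show ?thesis using F(2-4) by blast
qed

end




context hard
begin

definition "FF = (SOME F. (\<forall>g\<in>Gs. F (U_op N n g) = E g) \<and> (\<forall>u\<in>Bs. \<forall>v\<in>Bs. F (vadd u v) = F u + F v)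
      \<and> (\<forall>u\<in>Bs. \<forall>c. F (vsc c u) = c * F u) \<and> (\<forall>u\<in>Bs. F u \<le> pn u))"

lemma FF: "(\<forall>g\<in>Gs. FF (U_op N n g) = E g) \<and> (\<forall>u\<in>Bs. \<forall>v\<in>Bs. FF (vadd u v) = FF u + FF v)
      \<and> (\<forall>u\<in>Bs. \<forall>c. FF (vsc c u) = c * FF u) \<and> (\<forall>u\<in>Bs. FF u \<le> pn u)"
  unfolding FF_def by (rule someI_ex[OF exists_F])

lemma FF_U: "g \<in> Gs \<Longrightarrow> FF (U_op N n g) = E g" using FF by blast
lemma FF_add: "u \<in> Bs \<Longrightarrow> v \<in> Bs \<Longrightarrow> FF (vadd u v) = FF u + FF v" using FF by blast
lemma FF_sc: "u \<in> Bs \<Longrightarrow> FF (vsc c u) = c * FF u" using FF by blast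
lemma FF_le: "u \<in> Bs \<Longrightarrow> FF u \<le> pn u" using FF by blast

lemma const_Bs: "(\<lambda>_. c) \<in> Bs"
  unfolding Bs_def by (auto intro: bounded_subset[of "{c}"])

lemma FF_cong:
  assumes u: "u \<in> Bs" and v: "v \<in> Bs" and eq: "\<And>x. x \<in> \<Omega> \<Longrightarrow> u x = v x"
  shows "FF u = FF v"
proof -
  define d where "d = vadd u (vsc (-1) v)"
  have dB: "d \<in> Bs" unfolding d_def using Bs_add Bs_sc u v by blast
  have d0: "\<And>x. x \<in> \<Omega> \<Longrightarrow> d x = 0" using eq by (simp add: d_def vadd_def vsc_def)
  have "pn d \<le> 0" by (rule pn_le) (simp add: d0)
  then have a: "FF d \<le> 0" using FF_le[OF dB] by simp
  have "pn (vsc (-1) d) \<le> 0" by (rule pn_le) (simp add: d0 vsc_def)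
  then have "FF (vsc (-1) d) \<le> 0" using FF_le[OF Bs_sc[OF dB, of "-1"]] by simp
  then have b: "- FF d \<le> 0" using FF_sc[OF dB] by simp
  have "FF d = FF u - FF v" unfolding d_def using FF_add[OF u Bs_sc[OF v]] FF_sc[OF v] by simp
  then show ?thesis using a b by simp
qed

lemma E_one: "E (\<lambda>_. 1) = 1"
proof -
  interpret prob_space M by (rule M)
  have "measure M (space M) = 1" using prob_space by simp
  then show ?thesis unfolding E_def by simp
qed

lemma FF_one: "FF (\<lambda>_. 1) = 1"
proof -
  have "U_op N n (\<lambda>_::nat \<Rightarrow> 'a. 1::real) x = 1" for x :: "nat \<Rightarrow> 'a" by (rule U_one[OF nN])
  then have "U_op N n (\<lambda>_::nat \<Rightarrow> 'a. 1::real) = (\<lambda>_. 1)" by (simp add: fun_eq_iff)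
  then show ?thesis using FF_U[OF const_Gs[of 1]] E_one by simp
qed

lemma FF_pos:
  assumes u: "u \<in> Bs" and pos: "\<And>x. x \<in> \<Omega> \<Longrightarrow> 0 \<le> u x"
  shows "0 \<le> FF u"
proof -
  define c where "c = pn u"
  define w where "w = vadd (vsc c (\<lambda>_. 1)) (vsc (-1) u)"
  have wB: "w \<in> Bs" unfolding w_def using Bs_add Bs_sc u const_Bs by blast
  have "pn w \<le> c"
  proof (rule pn_le)
    fix x assume x: "x \<in> \<Omega>"
    have "u x \<le> c" using pn_ge[OF u x] c_def by simp
    then show "\<bar>w x\<bar> \<le> c" using pos[OF x] by (simp add: w_def vadd_def vsc_def)
  qed
  then have "FF w \<le> c" using FF_le[OF wB] by simp
  moreover have "FF w = c - FF u"
    unfolding w_def using FF_add[OF Bs_sc[OF const_Bs] Bs_sc[OF u]] FF_sc[OF const_Bs] FF_sc[OF u] FF_one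
    by simp
  ultimately show ?thesis by simp
qed

definition "Perms = {\<pi>. \<pi> permutes {..<N}}"

lemma finite_Perms: "finite Perms" unfolding Perms_def by (rule finite_permutations) simp
lemma card_Perms: "card Perms = fact N" unfolding Perms_def by (rule card_permutations) auto

lemma Perms_lt: "\<pi> \<in> Perms \<Longrightarrow> i < N \<Longrightarrow> \<pi> i < N"
  unfolding Perms_def using permutes_in_image by fastforce

lemma pm_Omega: "pm m \<sigma> y \<in> space (SB m)" by (rule pm_space)

lemma comp_Bs: "h \<in> Bs \<Longrightarrow> (\<And>i. i < N \<Longrightarrow> \<pi> i < N) \<Longrightarrow> (\<lambda>y. h (pm N \<pi> y)) \<in> Bs"
proof -
  assume h: "h \<in> Bs" and p: "\<And>i. i < N \<Longrightarrow> \<pi> i < N"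
  have "(\<lambda>y. h (pm N \<pi> y)) ` \<Omega> \<subseteq> h ` \<Omega>" using pm_Omega unfolding \<Omega>_def by auto
  then have "bounded ((\<lambda>y. h (pm N \<pi> y)) ` \<Omega>)" using h unfolding Bs_def by (auto intro: bounded_subset)
  moreover have "(\<lambda>y. h (pm N \<pi> y)) \<in> borel_measurable (SB N)"
    using h unfolding Bs_def by (intro measurable_compose[OF pm_meas]) (use p in auto)
  ultimately show ?thesis unfolding Bs_def by simp
qed

definition "Phi h = (1 / fact N) * (\<Sum>\<pi>\<in>Perms. FF (\<lambda>y. h (pm N \<pi> y)))"

lemma Phi_add: "u \<in> Bs \<Longrightarrow> v \<in> Bs \<Longrightarrow> Phi (vadd u v) = Phi u + Phi v"
proof -
  assume u: "u \<in> Bs" and v: "v \<in> Bs"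
  have "FF (\<lambda>y. vadd u v (pm N \<pi> y)) = FF (\<lambda>y. u (pm N \<pi> y)) + FF (\<lambda>y. v (pm N \<pi> y))"
    if "\<pi> \<in> Perms" for \<pi>
  proof -
    have "(\<lambda>y. vadd u v (pm N \<pi> y)) = vadd (\<lambda>y. u (pm N \<pi> y)) (\<lambda>y. v (pm N \<pi> y))"
      by (simp add: vadd_def)
    then show ?thesis using FF_add comp_Bs u v Perms_lt that by simp
  qed
  then show ?thesis unfolding Phi_def by (simp add: sum.distrib algebra_simps)
qed

lemma Phi_sc: "u \<in> Bs \<Longrightarrow> Phi (vsc c u) = c * Phi u"
proof -
  assume u: "u \<in> Bs"
  have "FF (\<lambda>y. vsc c u (pm N \<pi> y)) = c * FF (\<lambda>y. u (pm N \<pi> y))"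
    if "\<pi> \<in> Perms" for \<pi>
  proof -
    have "(\<lambda>y. vsc c u (pm N \<pi> y)) = vsc c (\<lambda>y. u (pm N \<pi> y))"
      by (simp add: vsc_def)
    then show ?thesis using FF_sc comp_Bs u Perms_lt that by simp
  qed
  then show ?thesis unfolding Phi_def by (simp add: sum_distrib_left algebra_simps)
qed

lemma Phi_pos: "u \<in> Bs \<Longrightarrow> (\<And>x. x \<in> \<Omega> \<Longrightarrow> 0 \<le> u x) \<Longrightarrow> 0 \<le> Phi u"
  unfolding Phi_def
  by (intro mult_nonneg_nonneg sum_nonneg FF_pos comp_Bs)
     (auto simp: Perms_lt \<Omega>_def pm_Omega)

lemma Phi_cong: "u \<in> Bs \<Longrightarrow> v \<in> Bs \<Longrightarrow> (\<And>x. x \<in> \<Omega> \<Longrightarrow> u x = v x) \<Longrightarrow> Phi u = Phi v"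
  unfolding Phi_def
  by (intro arg_cong[where f="(*) _"] sum.cong refl FF_cong comp_Bs)
     (auto simp: Perms_lt \<Omega>_def pm_Omega)

lemma Phi_one: "Phi (\<lambda>_. 1) = 1"
  unfolding Phi_def using FF_one card_Perms by simp

lemma Phi_inv:
  assumes p0: "\<pi>0 \<in> Perms" and h: "h \<in> Bs"
  shows "Phi (\<lambda>y. h (pm N \<pi>0 y)) = Phi h"
proof -
  have e: "(\<lambda>y. h (pm N \<pi>0 (pm N \<pi> y))) = (\<lambda>y. h (pm N (\<pi> \<circ> \<pi>0) y))" for \<pi>
  proof -
    have "pm N \<pi>0 (pm N \<pi> y) = pm N (\<pi> \<circ> \<pi>0) y" for y :: "nat \<Rightarrow> 'a"
      by (rule pm_pm) (rule Perms_lt[OF p0])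
    then show ?thesis by simp
  qed
  have pp: "\<pi>0 permutes {..<N}" using p0 Perms_def by simp
  have "(\<Sum>\<pi>\<in>Perms. FF (\<lambda>y. h (pm N (\<pi> \<circ> \<pi>0) y))) = (\<Sum>\<pi>\<in>Perms. FF (\<lambda>y. h (pm N \<pi> y)))"
  proof (rule sum.reindex_bij_betw)
    show "bij_betw (\<lambda>\<pi>. \<pi> \<circ> \<pi>0) Perms Perms"
    proof (rule bij_betw_byWitness[where f'="\<lambda>\<pi>. \<pi> \<circ> inv \<pi>0"])
      show "\<forall>a\<in>Perms. a \<circ> \<pi>0 \<circ> inv \<pi>0 = a"
        using permutes_inverses[OF pp] by (auto simp: fun_eq_iff)
      show "\<forall>a'\<in>Perms. a' \<circ> inv \<pi>0 \<circ> \<pi>0 = a'"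
        using permutes_inverses[OF pp] by (auto simp: fun_eq_iff)
      show "(\<lambda>\<pi>. \<pi> \<circ> \<pi>0) ` Perms \<subseteq> Perms"
        using permutes_compose[OF pp] unfolding Perms_def by auto
      show "(\<lambda>\<pi>. \<pi> \<circ> inv \<pi>0) ` Perms \<subseteq> Perms"
        using permutes_compose[OF permutes_inv[OF pp]] unfolding Perms_def by auto
    qed
  qed
  then show ?thesis unfolding Phi_def e by simp
qed

lemma Phi_U: "g \<in> Gs \<Longrightarrow> Phi (U_op N n g) = E g"
proof -
  assume g: "g \<in> Gs"
  have "(\<lambda>y. U_op N n g (pm N \<pi> y)) = U_op N n g" if "\<pi> \<in> Perms" for \<pi>
    using U_sym that unfolding Perms_def by (auto simp: fun_eq_iff)
  then have "(\<Sum>\<pi>\<in>Perms. FF (\<lambda>y. U_op N n g (pm N \<pi> y))) = (\<Sum>\<pi>\<in>Perms. E g)"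
    using FF_U[OF g] by simp
  then show ?thesis unfolding Phi_def using card_Perms by simp
qed

lemma pm_Gs_Bs: "g \<in> Gs \<Longrightarrow> (\<And>i. i < n \<Longrightarrow> \<sigma> i < N) \<Longrightarrow> (\<lambda>y. g (pm n \<sigma> y)) \<in> Bs"
proof -
  assume g: "g \<in> Gs" and p: "\<And>i. i < n \<Longrightarrow> \<sigma> i < N"
  have "(\<lambda>y. g (pm n \<sigma> y)) ` \<Omega> \<subseteq> g ` space (SB n)" using pm_Omega by auto
  then have "bounded ((\<lambda>y. g (pm n \<sigma> y)) ` \<Omega>)" using g unfolding Gs_def by (auto intro: bounded_subset)
  moreover have "(\<lambda>y. g (pm n \<sigma> y)) \<in> borel_measurable (SB N)"
    using g unfolding Gs_def by (intro measurable_compose[OF pm_meas]) (use p in auto)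
  ultimately show ?thesis unfolding Bs_def by simp
qed

lemma Phi_sum: "finite I \<Longrightarrow> (\<And>i. i \<in> I \<Longrightarrow> f i \<in> Bs) \<Longrightarrow>
     (\<lambda>y. \<Sum>i\<in>I. f i y) \<in> Bs \<and> Phi (\<lambda>y. \<Sum>i\<in>I. f i y) = (\<Sum>i\<in>I. Phi (f i))"
  by (rule lin_sum[OF Phi_add Phi_sc Bs_add Bs_sc const_Bs])

lemma Phi_marg: "g \<in> Gs \<Longrightarrow> Phi (\<lambda>y. g (pm n id y)) = E g"
proof -
  assume g: "g \<in> Gs"
  have each: "Phi (\<lambda>y. g (pm n \<sigma> y)) = Phi (\<lambda>y. g (pm n id y))" if s: "\<sigma> \<in> injs n N" for \<sigma>
  proof -
    obtain \<pi> where p: "\<pi> permutes {..<N}" "\<forall>i<n. \<pi> i = \<sigma> i" using extend_perm[OF s nN] by blast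
    have e1: "pm n \<sigma> y = pm n id (pm N \<pi> y)" for y :: "nat \<Rightarrow> 'a"
      using pm_pm[of n id N \<pi> y] nN p(2) by (auto intro!: pm_cong[THEN fun_cong])
    have "Phi (\<lambda>y. g (pm n \<sigma> y)) = Phi (\<lambda>y. (\<lambda>z. g (pm n id z)) (pm N \<pi> y))" by (simp add: e1)
    also have "\<dots> = Phi (\<lambda>z. g (pm n id z))"
      by (rule Phi_inv) (use p(1) Perms_def pm_Gs_Bs[OF g] nN in auto)
    finally show ?thesis .
  qed
  have Ueq: "U_op N n g = vsc (1 / ffact N n) (\<lambda>y. \<Sum>\<sigma>\<in>injs n N. g (pm n \<sigma> y))"
    by (simp add: fun_eq_iff vsc_def U_op_pm)
  have sB: "(\<lambda>\<sigma>. \<lambda>y. g (pm n \<sigma> y)) \<sigma> \<in> Bs" if "\<sigma> \<in> injs n N" for \<sigma>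
    using pm_Gs_Bs[OF g] injs_lt that by auto
  have ps: "(\<lambda>y. \<Sum>\<sigma>\<in>injs n N. g (pm n \<sigma> y)) \<in> Bs \<and>
      Phi (\<lambda>y. \<Sum>\<sigma>\<in>injs n N. g (pm n \<sigma> y)) = (\<Sum>\<sigma>\<in>injs n N. Phi (\<lambda>y. g (pm n \<sigma> y)))"
    using Phi_sum[OF finite_injs, where f="\<lambda>\<sigma> y. g (pm n \<sigma> y)"] sB by simp
  have "E g = Phi (U_op N n g)" using Phi_U[OF g] by simp
  also have "\<dots> = (1 / ffact N n) * (\<Sum>\<sigma>\<in>injs n N. Phi (\<lambda>y. g (pm n \<sigma> y)))"
    unfolding Ueq using Phi_sc ps by simp
  also have "\<dots> = Phi (\<lambda>y. g (pm n id y))"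
    using each ffact_pos[OF nN] by (simp add: ffact_card)
  finally show ?thesis by simp
qed

end




context hard
begin

definition "mu A = Phi (indicator A)"

lemma Omega_sets: "\<Omega> \<in> sets (SB N)" unfolding \<Omega>_def by simp

lemma ind_Bs: "A \<in> sets (SB N) \<Longrightarrow> indicator A \<in> Bs"
proof -
  assume A: "A \<in> sets (SB N)"
  have "indicator A ` \<Omega> \<subseteq> {0, 1::real}" by (auto simp: indicator_def)
  then have "bounded (indicator A ` \<Omega> :: real set)" by (rule bounded_subset[rotated]) simp
  then show ?thesis unfolding Bs_def using A by simp
qed

lemma mu_nonneg: "A \<in> sets (SB N) \<Longrightarrow> 0 \<le> mu A"
  unfolding mu_def by (rule Phi_pos[OF ind_Bs]) auto

lemma mu_cong: "A \<in> sets (SB N) \<Longrightarrow> h \<in> Bs \<Longrightarrow> (\<And>x. x \<in> \<Omega> \<Longrightarrow> indicator A x = h x) \<Longrightarrow> mu A = Phi h"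
  unfolding mu_def by (rule Phi_cong[OF ind_Bs])

lemma mu_Omega: "mu \<Omega> = 1"
  using mu_cong[OF Omega_sets const_Bs, of 1] Phi_one by simp

lemma Phi_zero: "Phi (\<lambda>_. 0) = 0"
proof -
  have "vsc 0 (\<lambda>_. 1::real) = (\<lambda>_::nat\<Rightarrow>'a. 0)" by (simp add: vsc_def)
  then show ?thesis using Phi_sc[OF const_Bs, of 0 1] by simp
qed

lemma mu_empty: "mu {} = 0"
proof -
  have "indicator {} = (\<lambda>_::nat\<Rightarrow>'a. 0::real)" by (simp add: fun_eq_iff)
  then show ?thesis unfolding mu_def using Phi_zero by simp
qed

lemma mu_add: "A \<in> sets (SB N) \<Longrightarrow> B \<in> sets (SB N) \<Longrightarrow> A \<inter> B = {} \<Longrightarrow> mu (A \<union> B) = mu A + mu B"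
proof -
  assume A: "A \<in> sets (SB N)" and B: "B \<in> sets (SB N)" and d: "A \<inter> B = {}"
  have "indicator (A \<union> B) = vadd (indicator A) (indicator B :: _ \<Rightarrow> real)"
    using d by (auto simp: vadd_def fun_eq_iff indicator_def)
  then show ?thesis unfolding mu_def using Phi_add[OF ind_Bs[OF A] ind_Bs[OF B]] by simp
qed

lemma mu_mono: "A \<in> sets (SB N) \<Longrightarrow> B \<in> sets (SB N) \<Longrightarrow> A \<subseteq> B \<Longrightarrow> mu A \<le> mu B"
proof -
  assume A: "A \<in> sets (SB N)" and B: "B \<in> sets (SB N)" and s: "A \<subseteq> B"
  have "B = A \<union> (B - A)" using s by auto
  then have "mu B = mu A + mu (B - A)" using mu_add[OF A sets.Diff[OF B A]] by auto
  then show ?thesis using mu_nonneg[OF sets.Diff[OF B A]] by simp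
qed

lemma mu_un_le: "A \<in> sets (SB N) \<Longrightarrow> B \<in> sets (SB N) \<Longrightarrow> mu (A \<union> B) \<le> mu A + mu B"
proof -
  assume A: "A \<in> sets (SB N)" and B: "B \<in> sets (SB N)"
  have "A \<union> B = A \<union> (B - A)" by auto
  then have "mu (A \<union> B) = mu A + mu (B - A)" using mu_add[OF A sets.Diff[OF B A]] by auto
  moreover have "mu (B - A) \<le> mu B" by (rule mu_mono) (use A B in auto)
  ultimately show ?thesis by simp
qed

lemma mu_UN_le: "finite I \<Longrightarrow> (\<And>i. i \<in> I \<Longrightarrow> A i \<in> sets (SB N)) \<Longrightarrow>
    mu (\<Union>i\<in>I. A i) \<le> (\<Sum>i\<in>I. mu (A i))"
proof (induction I rule: finite_induct)
  case empty then show ?case by (simp add: mu_empty)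
next
  case (insert x F)
  have "mu (\<Union>i\<in>insert x F. A i) = mu (A x \<union> (\<Union>i\<in>F. A i))" by simp
  also have "\<dots> \<le> mu (A x) + mu (\<Union>i\<in>F. A i)"
    by (rule mu_un_le) (use insert in auto)
  also have "\<dots> \<le> mu (A x) + (\<Sum>i\<in>F. mu (A i))" using insert by simp
  finally show ?case using insert by simp
qed

lemma mu_inv:
  assumes p: "\<pi> \<in> Perms" and A: "A \<in> sets (SB N)"
  shows "mu {y \<in> \<Omega>. pm N \<pi> y \<in> A} = mu A"
proof -
  have pmm: "pm N \<pi> \<in> measurable (SB N) (SB N)" by (rule pm_meas) (use Perms_lt p in auto)
  have S: "{y \<in> \<Omega>. pm N \<pi> y \<in> A} \<in> sets (SB N)"
    using measurable_sets[OF pmm A] unfolding \<Omega>_def by (simp add: vimage_def Int_def conj_commute)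
  have "mu {y \<in> \<Omega>. pm N \<pi> y \<in> A} = Phi (\<lambda>y. indicator A (pm N \<pi> y))"
    by (rule mu_cong[OF S comp_Bs[OF ind_Bs[OF A]]]) (auto simp: Perms_lt p indicator_def)
  also have "\<dots> = mu A" unfolding mu_def by (rule Phi_inv[OF p ind_Bs[OF A]])
  finally show ?thesis .
qed

lemma indicator_Gs: "B \<in> sets (SB n) \<Longrightarrow> indicator B \<in> Gs"
proof -
  assume B: "B \<in> sets (SB n)"
  have "indicator B ` space (SB n) \<subseteq> {0, 1::real}" by (auto simp: indicator_def)
  then have "bounded (indicator B ` space (SB n) :: real set)" by (rule bounded_subset[rotated]) simp
  then show ?thesis unfolding Gs_def using B by simp
qed

lemma E_indicator: "B \<in> sets (SB n) \<Longrightarrow> E (indicator B) = measure M (X -` B \<inter> space M)"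
proof -
  assume B: "B \<in> sets (SB n)"
  have "E (indicator B) = integral\<^sup>L (distr M (SB n) X) (indicator B)"
    unfolding E_def by (rule integral_distr[symmetric, OF Xm]) (use B in simp)
  also have "\<dots> = measure (distr M (SB n) X) B"
    using B by (simp add: Bochner_Integration.integral_indicator)
  also have "\<dots> = measure M (X -` B \<inter> space M)" by (rule measure_distr[OF Xm B])
  finally show ?thesis .
qed

lemma mu_marg:
  assumes B: "B \<in> sets (SB n)"
  shows "{y \<in> \<Omega>. pm n id y \<in> B} \<in> sets (SB N)"
    and "mu {y \<in> \<Omega>. pm n id y \<in> B} = measure M (X -` B \<inter> space M)"
proof -
  have pmm: "pm n id \<in> measurable (SB N) (SB n)" by (rule pm_meas) (use nN in auto)
  show S: "{y \<in> \<Omega>. pm n id y \<in> B} \<in> sets (SB N)"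
    using measurable_sets[OF pmm B] unfolding \<Omega>_def by (simp add: vimage_def Int_def conj_commute)
  have "mu {y \<in> \<Omega>. pm n id y \<in> B} = Phi (\<lambda>y. indicator B (pm n id y))"
    by (rule mu_cong[OF S pm_Gs_Bs[OF indicator_Gs[OF B]]]) (use nN in \<open>auto simp: indicator_def\<close>)
  also have "\<dots> = E (indicator B)" by (rule Phi_marg[OF indicator_Gs[OF B]])
  also have "\<dots> = measure M (X -` B \<inter> space M)" by (rule E_indicator[OF B])
  finally show "mu {y \<in> \<Omega>. pm n id y \<in> B} = measure M (X -` B \<inter> space M)" .
qed

definition "P1 = distr M borel (\<lambda>w. X w 0)"

lemma X0m: "(\<lambda>w. X w 0) \<in> measurable M borel"
proof -
  have c: "(\<lambda>x. x 0) \<in> measurable (SB n :: (nat \<Rightarrow> 'a) measure) borel"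
    unfolding Sn_def by (rule measurable_component_singleton) (use n0 in auto)
  show ?thesis by (rule measurable_compose[OF Xm c])
qed

lemma P1_prob: "prob_space P1"
  unfolding P1_def by (rule prob_space.prob_space_distr[OF M X0m])

lemma sets_P1: "sets P1 = sets borel" unfolding P1_def by simp
lemma space_P1: "space P1 = UNIV" unfolding P1_def by simp

lemma mu_coord:
  assumes A: "A \<in> sets borel" and i: "i < N"
  shows "{y \<in> \<Omega>. y i \<in> A} \<in> sets (SB N)" and "mu {y \<in> \<Omega>. y i \<in> A} = measure P1 A"
proof -
  have N0: "0 < N" using n0 nN by simp
  show Si: "{y \<in> \<Omega>. y i \<in> A} \<in> sets (SB N)"
    using measurable_sets[OF measurable_component_singleton[of i "{..<N}" "\<lambda>_. borel"] A] i
    unfolding \<Omega>_def Sn_def by (simp add: vimage_def Int_def conj_commute)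
  define \<pi> where "\<pi> = Transposition.transpose 0 i"
  have p: "\<pi> \<in> Perms" unfolding Perms_def \<pi>_def mem_Collect_eq by (rule permutes_swap_id) (use i N0 in auto)
  define C where "C = {y \<in> \<Omega>. y 0 \<in> A}"
  have C: "C \<in> sets (SB N)"
    using measurable_sets[OF measurable_component_singleton[of 0 "{..<N}" "\<lambda>_. borel"] A] N0
    unfolding C_def \<Omega>_def Sn_def by (simp add: vimage_def Int_def conj_commute)
  have "{y \<in> \<Omega>. y i \<in> A} = {y \<in> \<Omega>. pm N \<pi> y \<in> C}"
    using pm_Omega N0 unfolding C_def \<pi>_def \<Omega>_def by (auto simp: pm_def)
  then have "mu {y \<in> \<Omega>. y i \<in> A} = mu C" using mu_inv[OF p C] by simp
  also define B where "B = {z \<in> space (SB n). z 0 \<in> A}"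
  have B: "B \<in> sets (SB n)"
    using measurable_sets[OF measurable_component_singleton[of 0 "{..<n}" "\<lambda>_. borel"] A] n0
    unfolding B_def Sn_def by (simp add: vimage_def Int_def conj_commute)
  have "C = {y \<in> \<Omega>. pm n id y \<in> B}"
    using pm_Omega n0 unfolding C_def B_def by (auto simp: pm_def)
  then have "mu C = measure M (X -` B \<inter> space M)" using mu_marg(2)[OF B] by simp
  also have "X -` B \<inter> space M = (\<lambda>w. X w 0) -` A \<inter> space M"
    using measurable_space[OF Xm] unfolding B_def by auto
  also have "measure M \<dots> = measure P1 A" unfolding P1_def by (rule measure_distr[OF X0m A, symmetric])
  finally show "mu {y \<in> \<Omega>. y i \<in> A} = measure P1 A" .
qed

lemma P1_inner:
  assumes A: "A \<in> sets borel" and e: "e > 0"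
  shows "\<exists>K. compact K \<and> K \<subseteq> A \<and> measure P1 (A - K) \<le> e"
proof -
  interpret P: prob_space P1 by (rule P1_prob)
  define Ac where "Ac = UNIV - A"
  have Acs: "Ac \<in> sets P1" using A sets_P1 Ac_def by auto
  have "emeasure P1 Ac = (INF V \<in> {V. open V \<and> Ac \<subseteq> V}. emeasure P1 V)"
    using oreg Acs unfolding outer_regular_def P1_def by auto
  moreover have "emeasure P1 Ac < emeasure P1 Ac + ennreal (e/2)"
    using e by (simp add: P.emeasure_eq_measure ennreal_plus[symmetric] ennreal_less_iff del: ennreal_plus)
  ultimately obtain V where V: "open V" "Ac \<subseteq> V" "emeasure P1 V < emeasure P1 Ac + ennreal (e/2)"
    by (metis (no_types, lifting) INF_less_iff mem_Collect_eq)
  have Vs: "V \<in> sets P1" using V(1) sets_P1 by auto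
  have "measure P1 V < measure P1 Ac + e/2"
    using V(3) e by (simp add: P.emeasure_eq_measure ennreal_plus[symmetric] ennreal_less_iff del: ennreal_plus)
  then have mV: "measure P1 (V - Ac) \<le> e/2"
    using P.finite_measure_Diff[OF Vs Acs V(2)] by simp
  obtain K0 where K0: "compact K0" "K0 \<in> sets P1" "measure P1 K0 \<ge> 1 - e/2"
    using tight e unfolding tight_measure_def P1_def by (metis half_gt_zero)
  define K where "K = K0 - V"
  have Kc: "compact K" unfolding K_def by (rule compact_diff[OF K0(1) V(1)])
  have KA: "K \<subseteq> A" using V(2) unfolding K_def Ac_def by auto
  have sub: "A - K \<subseteq> (space P1 - K0) \<union> (V - Ac)" unfolding K_def Ac_def space_P1 by auto
  have "measure P1 (A - K) \<le> measure P1 ((space P1 - K0) \<union> (V - Ac))"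
    by (rule P.finite_measure_mono[OF sub]) (use K0 Vs Acs in auto)
  also have "\<dots> \<le> measure P1 (space P1 - K0) + measure P1 (V - Ac)"
    by (rule measure_Un_le) (use K0 Vs Acs in auto)
  also have "measure P1 (space P1 - K0) = 1 - measure P1 K0" using P.prob_compl[OF K0(2)] by simp
  finally have "measure P1 (A - K) \<le> e" using K0(3) mV by simp
  then show ?thesis using Kc KA by blast
qed

end




lemma Hausdorff_euclidean_t2: "Hausdorff_space (euclidean :: 'a::t2_space topology)"
  unfolding Hausdorff_space_def disjnt_def using hausdorff by auto

context hard
begin

definition "Rect = {PiE {..<N} A | A. \<forall>i<N. A i \<in> sets borel}"
definition "R = {\<Union>F | F. finite F \<and> F \<subseteq> Rect}"
definition "T = product_topology (\<lambda>_. (euclidean :: 'a topology)) {..<N}"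

lemma Omega_eq: "\<Omega> = PiE {..<N} (\<lambda>_. UNIV)" unfolding \<Omega>_def by (rule space_SB)

lemma Rect_sets: "r \<in> Rect \<Longrightarrow> r \<in> sets (SB N)"
  unfolding Rect_def Sn_def by (auto intro!: sets_PiM_I_finite)

lemma Rect_Omega: "r \<in> Rect \<Longrightarrow> r \<subseteq> \<Omega>"
  unfolding Rect_def Omega_eq by (auto simp: PiE_iff)

lemma Omega_Rect: "\<Omega> \<in> Rect"
  unfolding Rect_def Omega_eq by auto

lemma R_sets: "A \<in> R \<Longrightarrow> A \<in> sets (SB N)"
  unfolding R_def using Rect_sets by (auto intro!: sets.finite_Union)

lemma R_Omega: "A \<in> R \<Longrightarrow> A \<subseteq> \<Omega>"
  unfolding R_def using Rect_Omega by blast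

lemma Rect_R: "r \<in> Rect \<Longrightarrow> r \<in> R"
  unfolding R_def by (intro CollectI exI[of _ "{r}"]) auto

lemma R_empty: "{} \<in> R"
  unfolding R_def by (intro CollectI exI[of _ "{}"]) auto

lemma R_Un: "A \<in> R \<Longrightarrow> B \<in> R \<Longrightarrow> A \<union> B \<in> R"
proof -
  assume "A \<in> R" "B \<in> R"
  then obtain F G where "finite F" "F \<subseteq> Rect" "A = \<Union>F" "finite G" "G \<subseteq> Rect" "B = \<Union>G"
    unfolding R_def by blast
  then show ?thesis unfolding R_def by (intro CollectI exI[of _ "F \<union> G"]) auto
qed

lemma Rect_Int: "r \<in> Rect \<Longrightarrow> s \<in> Rect \<Longrightarrow> r \<inter> s \<in> Rect"
proof -
  assume "r \<in> Rect" "s \<in> Rect"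
  then obtain A B where "r = PiE {..<N} A" "\<forall>i<N. A i \<in> sets borel" "s = PiE {..<N} B" "\<forall>i<N. B i \<in> sets borel"
    unfolding Rect_def by blast
  then show ?thesis unfolding Rect_def
    by (intro CollectI exI[of _ "\<lambda>i. A i \<inter> B i"]) (auto simp: PiE_Int)
qed

lemma R_Int: "A \<in> R \<Longrightarrow> B \<in> R \<Longrightarrow> A \<inter> B \<in> R"
proof -
  assume "A \<in> R" "B \<in> R"
  then obtain F G where FG: "finite F" "F \<subseteq> Rect" "A = \<Union>F" "finite G" "G \<subseteq> Rect" "B = \<Union>G"
    unfolding R_def by blast
  have "A \<inter> B = \<Union>((\<lambda>(f,g). f \<inter> g) ` (F \<times> G))" using FG by auto
  moreover have "finite ((\<lambda>(f,g). f \<inter> g) ` (F \<times> G))" using FG by auto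
  moreover have "(\<lambda>(f,g). f \<inter> g) ` (F \<times> G) \<subseteq> Rect" using FG Rect_Int by auto
  ultimately show ?thesis unfolding R_def by blast
qed

lemma Rect_Diff: "r \<in> Rect \<Longrightarrow> s \<in> Rect \<Longrightarrow> r - s \<in> R"
proof -
  assume "r \<in> Rect" "s \<in> Rect"
  then obtain A B where AB: "r = PiE {..<N} A" "\<forall>i<N. A i \<in> sets borel" "s = PiE {..<N} B" "\<forall>i<N. B i \<in> sets borel"
    unfolding Rect_def by blast
  define D where "D j = PiE {..<N} (A(j := A j - B j))" for j
  have eq: "r - s = \<Union>(D ` {..<N})"
  proof
    show "r - s \<subseteq> \<Union>(D ` {..<N})"
    proof
      fix x assume x: "x \<in> r - s"
      then have xr: "x \<in> PiE {..<N} A" and xs: "x \<notin> PiE {..<N} B" using AB by auto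
      then obtain j where j: "j < N" "x j \<notin> B j" by (auto simp: PiE_iff)
      then have "x \<in> D j" using xr unfolding D_def by (auto simp: PiE_iff)
      then show "x \<in> \<Union>(D ` {..<N})" using j by auto
    qed
    show "\<Union>(D ` {..<N}) \<subseteq> r - s"
    proof
      fix x assume "x \<in> \<Union>(D ` {..<N})"
      then obtain j where j: "j < N" "x \<in> D j" by auto
      then have "x \<in> PiE {..<N} A" "x j \<notin> B j" unfolding D_def by (auto simp: PiE_iff split: if_splits)
      then show "x \<in> r - s" using AB j by (auto simp: PiE_iff)
    qed
  qed
  have "D j \<in> Rect" if "j < N" for j
    unfolding D_def Rect_def using AB that by (intro CollectI exI[of _ "A(j := A j - B j)"]) auto
  then have "D ` {..<N} \<subseteq> Rect" by auto
  then show ?thesis unfolding eq R_def by blast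
qed

lemma Rect_Diff_R: "finite G \<Longrightarrow> G \<subseteq> Rect \<Longrightarrow> r \<in> Rect \<Longrightarrow> r - \<Union>G \<in> R"
proof (induction G rule: finite_induct)
  case empty then show ?case using Rect_R by simp
next
  case (insert g G)
  have eq: "r - \<Union>(insert g G) = (r - g) \<inter> (r - \<Union>G)" by auto
  have a: "r - g \<in> R" by (rule Rect_Diff) (use insert in auto)
  have b: "r - \<Union>G \<in> R" using insert by auto
  show ?case unfolding eq by (rule R_Int[OF a b])
qed

lemma R_Diff: "A \<in> R \<Longrightarrow> B \<in> R \<Longrightarrow> A - B \<in> R"
proof -
  assume "A \<in> R" "B \<in> R"
  then obtain F G where FG: "finite F" "F \<subseteq> Rect" "A = \<Union>F" "finite G" "G \<subseteq> Rect" "B = \<Union>G"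
    unfolding R_def by blast
  have "finite F \<Longrightarrow> F \<subseteq> Rect \<Longrightarrow> \<Union>F - \<Union>G \<in> R"
  proof (induction F rule: finite_induct)
    case empty then show ?case using R_empty by simp
  next
    case (insert f F)
    have eq: "\<Union>(insert f F) - \<Union>G = (f - \<Union>G) \<union> (\<Union>F - \<Union>G)" by auto
    have a: "f - \<Union>G \<in> R" by (rule Rect_Diff_R) (use insert FG in auto)
    have b: "\<Union>F - \<Union>G \<in> R" using insert by auto
    show ?case unfolding eq by (rule R_Un[OF a b])
  qed
  then show ?thesis using FG by simp
qed

lemma ring_R: "ring_of_sets \<Omega> R"
  by (rule ring_of_setsI) (use R_Omega R_empty R_Un R_Diff in auto)

lemma prod_algebra_Rect: "prod_algebra {..<N} (\<lambda>_. borel) = Rect"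
  unfolding prod_algebra_eq_finite[OF finite_lessThan] Rect_def by (auto simp: Pi_iff)

lemma sets_SB_Rect: "sets (SB N) = sigma_sets \<Omega> Rect"
  unfolding Sn_def sets_PiM prod_algebra_Rect Omega_eq by simp

lemma sets_SB_R: "sigma_sets \<Omega> R = sets (SB N)"
proof
  show "sigma_sets \<Omega> R \<subseteq> sets (SB N)"
    unfolding \<Omega>_def by (rule sets.sigma_sets_subset) (use R_sets in auto)
  show "sets (SB N) \<subseteq> sigma_sets \<Omega> R"
    unfolding sets_SB_Rect by (rule sigma_sets_mono) (use Rect_R in auto)
qed

lemma Haus_T: "Hausdorff_space T"
  unfolding T_def Hausdorff_space_product_topology using Hausdorff_euclidean_t2 by auto

lemma rect_approx:
  assumes r: "r \<in> Rect" and e: "e > 0"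
  shows "\<exists>K. K \<subseteq> r \<and> compactin T K \<and> K \<in> sets (SB N) \<and> mu (r - K) \<le> e"
proof -
  obtain A where A: "r = PiE {..<N} A" "\<forall>i<N. A i \<in> sets borel" using r unfolding Rect_def by blast
  have N0: "0 < N" using n0 nN by simp
  have "\<forall>i. \<exists>K. i < N \<longrightarrow> (compact K \<and> K \<subseteq> A i \<and> measure P1 (A i - K) \<le> e / N)"
    using P1_inner A(2) e N0 by auto
  then obtain Kf where Kf: "\<And>i. i < N \<Longrightarrow> compact (Kf i) \<and> Kf i \<subseteq> A i \<and> measure P1 (A i - Kf i) \<le> e / N"
    by metis
  define K where "K = PiE {..<N} Kf"
  have KB: "Kf i \<in> sets borel" if "i < N" for i
    by (rule borel_closed, rule compact_imp_closed) (use Kf[OF that] in blast)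
  have Ks: "K \<in> sets (SB N)" unfolding K_def Sn_def by (rule sets_PiM_I_finite) (use KB in auto)
  have Kc: "compactin T K" unfolding K_def T_def compactin_PiE using Kf by auto
  have Kr: "K \<subseteq> r" unfolding K_def A(1) using Kf by (auto simp: PiE_iff)
  have cs: "{y \<in> \<Omega>. y i \<in> A i - Kf i} \<in> sets (SB N)" if "i < N" for i
    by (rule mu_coord(1)[OF _ that]) (use A(2) KB that in auto)
  have sub: "r - K \<subseteq> (\<Union>i\<in>{..<N}. {y \<in> \<Omega>. y i \<in> A i - Kf i})"
    unfolding A(1) K_def Omega_eq by (auto simp: PiE_iff)
  have "mu (r - K) \<le> mu (\<Union>i\<in>{..<N}. {y \<in> \<Omega>. y i \<in> A i - Kf i})"
    by (rule mu_mono[OF _ _ sub]) (use Rect_sets[OF r] Ks cs in auto)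
  also have "\<dots> \<le> (\<Sum>i\<in>{..<N}. mu {y \<in> \<Omega>. y i \<in> A i - Kf i})"
    by (rule mu_UN_le) (use cs in auto)
  also have "\<dots> = (\<Sum>i\<in>{..<N}. measure P1 (A i - Kf i))"
  proof (rule sum.cong[OF refl])
    fix i assume i: "i \<in> {..<N}"
    show "mu {y \<in> \<Omega>. y i \<in> A i - Kf i} = measure P1 (A i - Kf i)"
      by (rule mu_coord(2)) (use A(2) KB i in auto)
  qed
  also have "\<dots> \<le> (\<Sum>i\<in>{..<N}. e / N)" by (rule sum_mono) (use Kf in auto)
  also have "\<dots> = e" using N0 by simp
  finally show ?thesis using Ks Kc Kr by blast
qed

lemma R_approx:
  assumes A: "A \<in> R" and e: "e > 0"
  shows "\<exists>K. K \<subseteq> A \<and> compactin T K \<and> K \<in> sets (SB N) \<and> mu (A - K) \<le> e"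
proof -
  obtain F where F: "finite F" "F \<subseteq> Rect" "A = \<Union>F" using A unfolding R_def by blast
  have "finite F \<Longrightarrow> F \<subseteq> Rect \<Longrightarrow> \<forall>e>0. \<exists>K. K \<subseteq> \<Union>F \<and> compactin T K \<and> K \<in> sets (SB N) \<and> mu (\<Union>F - K) \<le> e"
  proof (induction F rule: finite_induct)
    case empty then show ?case using mu_empty by (intro allI impI exI[of _ "{}"]) auto
  next
    case (insert f F)
    show ?case
    proof (intro allI impI)
      fix e :: real assume e: "e > 0"
      obtain K1 where K1: "K1 \<subseteq> f" "compactin T K1" "K1 \<in> sets (SB N)" "mu (f - K1) \<le> e/2"
        using rect_approx[of f "e/2"] insert e by auto
      obtain K2 where K2: "K2 \<subseteq> \<Union>F" "compactin T K2" "K2 \<in> sets (SB N)" "mu (\<Union>F - K2) \<le> e/2"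
        using insert e by (meson half_gt_zero insert_subset)
      have fs: "f \<in> sets (SB N)" using insert Rect_sets by auto
      have Fs: "\<Union>F \<in> sets (SB N)" using insert Rect_sets by (auto intro!: sets.finite_Union)
      have "mu (\<Union>(insert f F) - (K1 \<union> K2)) \<le> mu ((f - K1) \<union> (\<Union>F - K2))"
        by (rule mu_mono) (use fs Fs K1 K2 in auto)
      also have "\<dots> \<le> mu (f - K1) + mu (\<Union>F - K2)" by (rule mu_un_le) (use fs Fs K1 K2 in auto)
      finally show "\<exists>K. K \<subseteq> \<Union>(insert f F) \<and> compactin T K \<and> K \<in> sets (SB N) \<and> mu (\<Union>(insert f F) - K) \<le> e"
        using K1 K2 by (intro exI[of _ "K1 \<union> K2"]) (auto intro: compactin_Un)
    qed
  qed
  then show ?thesis using F e by auto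
qed

end




lemma geom_sum: "(\<Sum>j\<le>k. e / 2 ^ Suc j) = e - e / 2 ^ Suc k" for e :: real
  by (induction k) (auto simp: field_simps)

context hard
begin

lemma mu_small:
  assumes A: "range A \<subseteq> R" and dec: "decseq A" and emp: "(\<Inter>i. A i) = {}" and e: "e > 0"
  shows "\<exists>m. \<forall>k\<ge>m. mu (A k) \<le> e"
proof -
  have "\<forall>k. \<exists>K. K \<subseteq> A k \<and> compactin T K \<and> K \<in> sets (SB N) \<and> mu (A k - K) \<le> e / 2 ^ Suc k"
  proof
    fix k
    have "A k \<in> R" using A by auto
    moreover have "e / 2 ^ Suc k > 0" using e by simp
    ultimately show "\<exists>K. K \<subseteq> A k \<and> compactin T K \<and> K \<in> sets (SB N) \<and> mu (A k - K) \<le> e / 2 ^ Suc k"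
      by (rule R_approx)
  qed
  then obtain K where Kall: "\<forall>k. K k \<subseteq> A k \<and> compactin T (K k) \<and> K k \<in> sets (SB N) \<and> mu (A k - K k) \<le> e / 2 ^ Suc k"
    by (rule choice[THEN exE]) blast
  have K: "\<And>k. K k \<subseteq> A k" "\<And>k. compactin T (K k)" "\<And>k. K k \<in> sets (SB N)"
    "\<And>k. mu (A k - K k) \<le> e / 2 ^ Suc k" using Kall by blast+
  have cl: "\<And>k. closedin T (K k)" by (rule compactin_imp_closedin[OF Haus_T K(2)])
  have fip: "\<forall>U. (\<forall>C\<in>U. closedin T C) \<and> (\<forall>F. finite F \<and> F \<subseteq> U \<longrightarrow> K 0 \<inter> \<Inter>F \<noteq> {}) \<longrightarrow> K 0 \<inter> \<Inter>U \<noteq> {}"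
    using compactin_fip[THEN iffD1, OF K(2)[of 0]] by (rule conjunct2)
  have "\<Inter>(range K) \<subseteq> \<Inter>(range A)" using K(1) by blast
  then have e0: "K 0 \<inter> \<Inter>(range K) = {}" using emp by auto
  have c1: "\<forall>C\<in>range K. closedin T C" using cl by blast
  have nf: "\<not> (\<forall>F. finite F \<and> F \<subseteq> range K \<longrightarrow> K 0 \<inter> \<Inter>F \<noteq> {})"
  proof
    assume a: "\<forall>F. finite F \<and> F \<subseteq> range K \<longrightarrow> K 0 \<inter> \<Inter>F \<noteq> {}"
    have "K 0 \<inter> \<Inter>(range K) \<noteq> {}" by (rule fip[rule_format, OF conjI[OF c1 a]])
    then show False using e0 by simp
  qed
  obtain F where F: "finite F" "F \<subseteq> range K" "K 0 \<inter> \<Inter>F = {}"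
    using nf unfolding not_all not_imp not_not by blast
  obtain C where C: "finite C" "F = K ` C" using finite_subset_image[OF F(1,2)] by blast
  obtain m where m: "C \<subseteq> {..<m}" using finite_nat_bounded[OF C(1)] by blast
  have "mu (A k) \<le> e" if k: "k \<ge> m" for k
  proof -
    have sub: "A k \<subseteq> (\<Union>j\<in>{..k}. A j - K j)"
    proof
      fix x assume x: "x \<in> A k"
      show "x \<in> (\<Union>j\<in>{..k}. A j - K j)"
      proof (cases "x \<in> K 0")
        case False
        then show ?thesis using x decseqD[OF dec, of 0 k] by auto
      next
        case True
        then obtain c where c: "c \<in> C" "x \<notin> K c" using F(3) C(2) by auto
        then have "c \<le> k" using m k by auto
        then show ?thesis using x c decseqD[OF dec, of c k] by auto
      qed
    qed
    have As: "A j \<in> sets (SB N)" for j using A R_sets by blast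
    have Ds: "A j - K j \<in> sets (SB N)" for j by (rule sets.Diff[OF As K(3)])
    have Us: "(\<Union>j\<in>{..k}. A j - K j) \<in> sets (SB N)" by (rule sets.finite_UN) (simp_all add: Ds)
    have "mu (A k) \<le> mu (\<Union>j\<in>{..k}. A j - K j)"
      by (rule mu_mono[OF As Us sub])
    also have "\<dots> \<le> (\<Sum>j\<le>k. mu (A j - K j))" by (rule mu_UN_le) (simp_all add: Ds)
    also have "\<dots> \<le> (\<Sum>j\<le>k. e / 2 ^ Suc j)" by (rule sum_mono) (use K(4) in auto)
    also have "\<dots> \<le> e" by (subst geom_sum) (use e in simp)
    finally show ?thesis .
  qed
  then show ?thesis by blast
qed

lemma mu_cont:
  assumes A: "range A \<subseteq> R" and dec: "decseq A" and emp: "(\<Inter>i. A i) = {}"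
  shows "(\<lambda>i. mu (A i)) \<longlonglongrightarrow> 0"
proof (rule metric_LIMSEQ_I)
  fix r :: real assume r: "r > 0"
  obtain m where m: "\<forall>k\<ge>m. mu (A k) \<le> r/2" using mu_small[OF A dec emp, of "r/2"] r by auto
  have "dist (mu (A k)) 0 < r" if "k \<ge> m" for k
  proof -
    have "0 \<le> mu (A k)" using A by (auto intro: mu_nonneg R_sets)
    then show ?thesis using m that r by (auto simp: dist_real_def)
  qed
  then show "\<exists>no. \<forall>n\<ge>no. dist (mu (A n)) 0 < r" by blast
qed

lemma exists_Q: "\<exists>Q. sets Q = sets (SB N) \<and> space Q = \<Omega> \<and> (\<forall>A\<in>R. emeasure Q A = ennreal (mu A))"
proof -
  interpret ring_of_sets \<Omega> R by (rule ring_R)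
  have "\<exists>\<mu> :: (nat \<Rightarrow> 'a) set \<Rightarrow> ennreal. (\<forall>s\<in>R. \<mu> s = ennreal (mu s)) \<and> measure_space \<Omega> (sigma_sets \<Omega> R) \<mu>"
  proof (rule caratheodory_empty_continuous)
    show "positive R (\<lambda>A. ennreal (mu A))" unfolding positive_def using mu_empty by simp
    show "additive R (\<lambda>A. ennreal (mu A))"
      unfolding additive_def
    proof (intro ballI impI)
      fix x y :: "(nat \<Rightarrow> 'a) set" assume xy: "x \<in> R" "y \<in> R" "x \<inter> y = {}"
      have "mu (x \<union> y) = mu x + mu y" by (rule mu_add) (use R_sets xy in auto)
      then show "ennreal (mu (x \<union> y)) = ennreal (mu x) + ennreal (mu y)"
        using ennreal_plus mu_nonneg[OF R_sets[OF xy(1)]] mu_nonneg[OF R_sets[OF xy(2)]] by simp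
    qed
    show "\<And>A. A \<in> R \<Longrightarrow> ennreal (mu A) \<noteq> \<infinity>" by simp
    show "(\<lambda>i. ennreal (mu (A i))) \<longlonglongrightarrow> 0" if "range A \<subseteq> R" "decseq A" "(\<Inter>i. A i) = {}" for A
    proof -
      have "(\<lambda>i. ennreal (mu (A i))) \<longlonglongrightarrow> ennreal 0" by (rule tendsto_ennrealI[OF mu_cont[OF that]])
      then show ?thesis by simp
    qed
  qed
  then obtain \<mu> where \<mu>: "\<forall>s\<in>R. \<mu> s = ennreal (mu s)" "measure_space \<Omega> (sigma_sets \<Omega> R) \<mu>" by blast
  define Q where "Q = measure_of \<Omega> (sets (SB N)) \<mu>"
  have sp: "sets (SB N) \<subseteq> Pow \<Omega>" unfolding \<Omega>_def by (rule sets.space_closed)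
  have sQ: "sets Q = sets (SB N)" unfolding Q_def sets_measure_of[OF sp]
    unfolding \<Omega>_def by (rule sets.sigma_sets_eq)
  have spQ: "space Q = \<Omega>" unfolding Q_def by (rule space_measure_of[OF sp])
  have msp: "measure_space \<Omega> (sets (SB N)) \<mu>" using \<mu>(2) unfolding sets_SB_R .
  have ms: "sigma_algebra \<Omega> (sets (SB N))" "positive (sets (SB N)) \<mu>" "countably_additive (sets (SB N)) \<mu>"
    using msp unfolding measure_space_def by blast+
  have "emeasure Q A = ennreal (mu A)" if "A \<in> R" for A
    unfolding Q_def using emeasure_measure_of_sigma[OF ms R_sets[OF that]] \<mu>(1) that by metis
  then show ?thesis using sQ spQ by blast
qed

lemma final_Q: "\<exists>Q. prob_space Q \<and> sets Q = sets (SB N) \<and> exchangeable_law N Q \<and>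
          distr Q (SB n) (\<lambda>y. \<lambda>i\<in>{..<n}. y i) = distr M (SB n) X"
proof -
  obtain Q where Q: "sets Q = sets (SB N)" "space Q = \<Omega>" "\<And>A. A \<in> R \<Longrightarrow> emeasure Q A = ennreal (mu A)"
    using exists_Q by metis
  have QR: "\<And>A. A \<in> Rect \<Longrightarrow> emeasure Q A = ennreal (mu A)" using Q(3) Rect_R by blast
  have PQ: "prob_space Q" by (rule prob_spaceI) (use Q(2) QR[OF Omega_Rect] mu_Omega in simp)
  interpret PQ: prob_space Q by (rule PQ)
  note mQ = measurable_cong_sets[OF Q(1) refl]
  have sigQ: "sets Q = sigma_sets \<Omega> Rect" using Q(1) sets_SB_Rect by simp
  have IS: "Int_stable Rect" unfolding Int_stable_def using Rect_Int by blast
  have RP: "Rect \<subseteq> Pow \<Omega>" using Rect_Omega by blast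
  have exch: "exchangeable_law N Q"
    unfolding exchangeable_law_def
  proof (intro allI impI)
    fix \<pi> assume p: "\<pi> permutes {..<N}"
    have pP: "\<pi> \<in> Perms" using p Perms_def by simp
    have pmf: "(\<lambda>x. \<lambda>i\<in>{..<N}. x (\<pi> i)) = pm N \<pi>" by (simp add: pm_def fun_eq_iff)
    have pmm: "pm N \<pi> \<in> measurable Q (SB N)" unfolding mQ by (rule pm_meas) (use Perms_lt pP in auto)
    show "distr Q (SB N) (\<lambda>x. \<lambda>i\<in>{..<N}. x (\<pi> i)) = Q"
      unfolding pmf
    proof (rule measure_eqI_generator_eq[OF IS RP, where A="\<lambda>_. \<Omega>"])
      show "sets (distr Q (SB N) (pm N \<pi>)) = sigma_sets \<Omega> Rect" using sets_SB_Rect by simp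
      show "sets Q = sigma_sets \<Omega> Rect" by (rule sigQ)
      show "range (\<lambda>_. \<Omega>) \<subseteq> Rect" using Omega_Rect by auto
      show "(\<Union>i. \<Omega>) = \<Omega>" by simp
      show "\<And>i. emeasure (distr Q (SB N) (pm N \<pi>)) \<Omega> \<noteq> \<infinity>"
        using Omega_sets by (simp add: emeasure_distr[OF pmm] PQ.emeasure_eq_measure)
      fix Y :: "(nat \<Rightarrow> 'a) set" assume Y: "Y \<in> Rect"
      obtain B where B: "Y = PiE {..<N} B" "\<forall>i<N. B i \<in> sets borel" using Y unfolding Rect_def by blast
      define S where "S = PiE {..<N} (\<lambda>j. B (inv \<pi> j))"
      have invlt: "\<And>j. j < N \<Longrightarrow> inv \<pi> j < N"
        using permutes_in_image[OF permutes_inv[OF p]] by auto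
      have SR: "S \<in> Rect" unfolding S_def Rect_def using B(2) invlt by auto
      have Seq: "S = {y \<in> \<Omega>. pm N \<pi> y \<in> Y}"
      proof (rule set_eqI)
        fix y :: "nat \<Rightarrow> 'a"
        have e1: "(\<forall>i<N. y (\<pi> i) \<in> B i) \<longleftrightarrow> (\<forall>j<N. y j \<in> B (inv \<pi> j))"
        proof
          assume h: "\<forall>i<N. y (\<pi> i) \<in> B i"
          show "\<forall>j<N. y j \<in> B (inv \<pi> j)"
          proof (intro allI impI)
            fix j assume j: "j < N"
            have "y (\<pi> (inv \<pi> j)) \<in> B (inv \<pi> j)" using h invlt[OF j] by blast
            then show "y j \<in> B (inv \<pi> j)" using permutes_inverses(1)[OF p] by simp
          qed
        next
          assume h: "\<forall>j<N. y j \<in> B (inv \<pi> j)"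
          show "\<forall>i<N. y (\<pi> i) \<in> B i"
          proof (intro allI impI)
            fix i assume i: "i < N"
            have "y (\<pi> i) \<in> B (inv \<pi> (\<pi> i))" using h Perms_lt[OF pP i] by blast
            then show "y (\<pi> i) \<in> B i" using permutes_inverses(2)[OF p] by simp
          qed
        qed
        have e2: "pm N \<pi> y \<in> Y \<longleftrightarrow> (\<forall>i<N. y (\<pi> i) \<in> B i)"
          unfolding B(1) pm_def by (auto simp: PiE_iff)
        have e3: "y \<in> S \<longleftrightarrow> y \<in> \<Omega> \<and> (\<forall>j<N. y j \<in> B (inv \<pi> j))"
          unfolding S_def Omega_eq by (auto simp: PiE_iff)
        show "y \<in> S \<longleftrightarrow> y \<in> {y \<in> \<Omega>. pm N \<pi> y \<in> Y}" using e1 e2 e3 by simp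
      qed
      have "emeasure (distr Q (SB N) (pm N \<pi>)) Y = emeasure Q (pm N \<pi> -` Y \<inter> space Q)"
        by (rule emeasure_distr[OF pmm Rect_sets[OF Y]])
      also have "pm N \<pi> -` Y \<inter> space Q = S" unfolding Seq Q(2) by auto
      also have "emeasure Q S = ennreal (mu S)" by (rule QR[OF SR])
      also have "mu S = mu Y" unfolding Seq by (rule mu_inv[OF pP Rect_sets[OF Y]])
      also have "ennreal (mu Y) = emeasure Q Y" by (rule QR[OF Y, symmetric])
      finally show "emeasure (distr Q (SB N) (pm N \<pi>)) Y = emeasure Q Y" .
    qed
  qed
  have marg: "distr Q (SB n) (\<lambda>y. \<lambda>i\<in>{..<n}. y i) = distr M (SB n) X"
    unfolding pm_id[symmetric]
  proof -
    interpret PM: prob_space M by (rule M)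
    have pmm: "pm n id \<in> measurable Q (SB n)" unfolding mQ by (rule pm_meas) (use nN in auto)
    let ?E = "prod_algebra {..<n} (\<lambda>_. borel :: 'a measure)"
    let ?O = "space (SB n) :: (nat \<Rightarrow> 'a) set"
    have sE: "sets (SB n) = sigma_sets ?O ?E" unfolding Sn_def sets_PiM space_PiM by simp
    have sO: "?O = PiE {..<n} (\<lambda>_. space borel)" unfolding Sn_def space_PiM by simp
    show "distr Q (SB n) (pm n id) = distr M (SB n) X"
    proof (rule measure_eqI_generator_eq[OF Int_stable_prod_algebra _ _ _ _ _ _, where \<Omega>="?O" and A="\<lambda>_. ?O"])
      show "?E \<subseteq> Pow ?O" unfolding sO by (rule prod_algebra_sets_into_space)
      show "sets (distr Q (SB n) (pm n id)) = sigma_sets ?O ?E" using sE by simp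
      show "sets (distr M (SB n) X) = sigma_sets ?O ?E" using sE by simp
      show "range (\<lambda>_. ?O) \<subseteq> ?E" unfolding sO using space_in_prod_algebra[of "{..<n}" "\<lambda>_. borel :: 'a measure"] by auto
      show "(\<Union>i. ?O) = ?O" by simp
      show "\<And>i. emeasure (distr Q (SB n) (pm n id)) ?O \<noteq> \<infinity>"
        by (simp add: emeasure_distr[OF pmm] PQ.emeasure_eq_measure)
      fix Y :: "(nat \<Rightarrow> 'a) set" assume Y: "Y \<in> ?E"
      obtain C where C: "Y = PiE {..<n} C" "C \<in> (\<Pi> j\<in>{..<n}. sets borel)"
        using Y unfolding prod_algebra_eq_finite[OF finite_lessThan] by blast
      have Ys: "Y \<in> sets (SB n)" unfolding sE by (rule sigma_sets.Basic[OF Y])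
      define S where "S = PiE {..<N} (\<lambda>i. if i < n then C i else UNIV)"
      have SR: "S \<in> Rect" unfolding S_def Rect_def using C(2)
        by (intro CollectI exI[of _ "\<lambda>i. if i < n then C i else UNIV"]) auto
      have Seq: "S = {y \<in> \<Omega>. pm n id y \<in> Y}"
      proof (rule set_eqI)
        fix y :: "nat \<Rightarrow> 'a"
        have e2: "pm n id y \<in> Y \<longleftrightarrow> (\<forall>i<n. y i \<in> C i)"
          unfolding C(1) pm_def by (auto simp: PiE_iff)
        have e3: "y \<in> S \<longleftrightarrow> y \<in> \<Omega> \<and> (\<forall>i<n. y i \<in> C i)"
          unfolding S_def Omega_eq using nN by (auto simp: PiE_iff)
        show "y \<in> S \<longleftrightarrow> y \<in> {y \<in> \<Omega>. pm n id y \<in> Y}" using e2 e3 by simp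
      qed
      have "emeasure (distr Q (SB n) (pm n id)) Y = emeasure Q (pm n id -` Y \<inter> space Q)"
        by (rule emeasure_distr[OF pmm Ys])
      also have "pm n id -` Y \<inter> space Q = S" unfolding Seq Q(2) by auto
      also have "emeasure Q S = ennreal (mu S)" by (rule QR[OF SR])
      also have "mu S = measure M (X -` Y \<inter> space M)" unfolding Seq by (rule mu_marg(2)[OF Ys])
      also have "ennreal (measure M (X -` Y \<inter> space M)) = emeasure (distr M (SB n) X) Y"
        by (simp add: emeasure_distr[OF Xm Ys] PM.emeasure_eq_measure)
      finally show "emeasure (distr Q (SB n) (pm n id)) Y = emeasure (distr M (SB n) X) Y" .
    qed
  qed
  show ?thesis by (intro exI[of _ Q] conjI PQ Q(1) exch marg)
qed

end


theorem theorem2: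
  fixes M :: "'w measure" and X :: "'w \<Rightarrow> nat \<Rightarrow> 'a::t2_space" and n N :: nat
  assumes "locally_compact_space (euclidean :: 'a topology)"
    and "0 < n" and "n \<le> N"
    and "prob_space M"
    and "X \<in> measurable M (SB n)"
    and "exchangeable M n X"
    and "outer_regular (distr M borel (\<lambda>w. X w 0))"
    and "tight_measure (distr M borel (\<lambda>w. X w 0))"
  shows "extendible M n N X \<longleftrightarrow> ext_norm M n N X = 1"
proof
  assume ext: "extendible M n N X"
  show "ext_norm M n N X = 1"
    unfolding ext_norm_eq1_iff[OF assms(4) assms(5) assms(3)]
  proof (intro allI impI)
    fix g :: "(nat \<Rightarrow> 'a) \<Rightarrow> real"
    assume g: "g \<in> borel_measurable (SB n)" "bounded (g ` space (SB n))"
      "\<forall>x\<in>space (SB N). \<bar>U_op N n g x\<bar> \<le> 1"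
    show "\<bar>integral\<^sup>L M (\<lambda>w. g (X w))\<bar> \<le> 1"
      by (rule easy_dir[OF ext assms(4) assms(5) assms(3) g])
  qed
next
  assume e1: "ext_norm M n N X = 1"
  have norm1: "\<And>g :: (nat \<Rightarrow> 'a) \<Rightarrow> real. g \<in> borel_measurable (SB n) \<Longrightarrow> bounded (g ` space (SB n)) \<Longrightarrow>
        (\<forall>x\<in>space (SB N). \<bar>U_op N n g x\<bar> \<le> 1) \<Longrightarrow> \<bar>integral\<^sup>L M (\<lambda>w. g (X w))\<bar> \<le> 1"
    using e1 unfolding ext_norm_eq1_iff[OF assms(4) assms(5) assms(3)] by blast
  interpret H: hard M X n N
    by (rule hard.intro) (use assms norm1 in auto)
  obtain Q where "prob_space Q" "sets Q = sets (SB N)" "exchangeable_law N Q"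
      "distr Q (SB n) (\<lambda>y. \<lambda>i\<in>{..<n}. y i) = distr M (SB n) X"
    using H.final_Q by blast
  then show "extendible M n N X" unfolding extendible_def by blast
qed

end
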